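(* In the setting of the context, let $K=(K_c,K_h)$ and $r$ be formal power series as produced in the setting (so $K_c(x,y)=(x,y)+$ terms of order $\ge2$, $K_h$ has only terms of order $\ge2$, and $DK\,r=F\circ K$ formally). Let $\mathcal E(\mathbf x)=E(\mathcal C\mathbf x+L_c)$ and $\mathcal E_0=\mathcal E(0)=E(L_c)$. If the constant $$\mathscr E=\Omega_{xxx}\Omega_{yy}^3-3\Omega_{xxy}\Omega_{yy}^2\Omega_{xy}+3\Omega_{xyy}\Omega_{yy}\Omega_{xy}^2-\Omega_{yyy}\Omega_{xy}^3$$ is non-zero, then there exists a formal power series $h:\mathbb R\to\mathbb R^2$ of the form $$h(t)=\Big(\sum_{n\ge2}c_nt^n,\;t^3\Big)$$ such that $\mathcal E(K(h(t)))-\mathcal E_0=0$ as a formal power series in $t$.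
   Context: Circular restricted four body problem (CRFBP): masses $m_1+m_2+m_3=1$, $0<m_3\le m_2\le m_1$, primaries at fixed positions $(x_j,y_j)$, $j=1,2,3$, $r_j(x,y)=\sqrt{(x-x_j)^2+(y-y_j)^2}$, $\Omega(x,y)=\tfrac12(x^2+y^2)+\sum_j m_j/r_j$, vector field $f(x,\dot x,y,\dot y)=(\dot x,\,2\dot y+\Omega_x,\,\dot y,\,-2\dot x+\Omega_y)$, and Jacobi integral $E(x,\dot x,y,\dot y)=-(\dot x^2+\dot y^2)+2\Omega(x,y)$, which is conserved by $f$. Let $L_c=(x_0,0,y_0,0)$ be a critical libration point: $\Omega_x=\Omega_y=0$ and $\Omega_{xx}\Omega_{yy}=\Omega_{xy}^2$ at $(x_0,y_0)$; as in the paper's setting assume also $\Omega_{yy}\ne0$ and $\Omega_{xx}+\Omega_{yy}>4$ (all derivatives of $\Omega$ evaluated at $(x_0,y_0)$). Set $\lambda_\pm=\mp\sqrt{-4+\Omega_{xx}+\Omega_{yy}}$, $\mathbf v_0=(\Omega_{yy},0,-\Omega_{xy},0)$, $\mathbf v_1=(\Omega_{xy},\Omega_{yy},2-\Omega_{xx},-\Omega_{xy})$, $\mathbf v_\pm=(\Omega_{xy}+2\lambda_\pm,\lambda_\pm(\Omega_{xy}+2\lambda_\pm),\Omega_{yy}-4,\lambda_\pm(\Omega_{yy}-4))$, $\mathcal C$ the matrix with columns $\mathbf v_0,\mathbf v_1,\mathbf v_+,\mathbf v_-$, and $F(\mathbf x)=\mathcal C^{-1}f(\mathcal C\mathbf x+L_c)$.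 The formal series $K:\mathbb R^2\to\mathbb R^4$, $r:\mathbb R^2\to\mathbb R^2$ satisfy $DK(\mathbf y)r(\mathbf y)=F(K(\mathbf y))$ order by order, with $r(x,y)=(y,0)+$ terms of order $\ge2$. All compositions are of formal power series (with $\mathcal E$ replaced by its Taylor series at $0$). *)

theory Defs
  imports "HOL-Analysis.Analysis" "HOL-Computational_Algebra.Formal_Power_Series"
begin

text \<open>Effective potential of the CRFBP. Primaries indexed by j in {1,2,3}:
  masses m j, positions (px j, py j).\<close>
definition Omega :: "(nat \<Rightarrow> real) \<Rightarrow> (nat \<Rightarrow> real) \<Rightarrow> (nat \<Rightarrow> real) \<Rightarrow> real \<Rightarrow> real \<Rightarrow> real" where
  "Omega m px py x y = (x\<^sup>2 + y\<^sup>2) / 2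
     + (\<Sum>j\<in>{1,2,3::nat}. m j / sqrt ((x - px j)\<^sup>2 + (y - py j)\<^sup>2))"

definition pd :: "nat \<Rightarrow> nat \<Rightarrow> (real \<Rightarrow> real \<Rightarrow> real) \<Rightarrow> real \<Rightarrow> real \<Rightarrow> real" where
  "pd i j g a b = (deriv ^^ i) (\<lambda>x. (deriv ^^ j) (\<lambda>y. g x y) b) a"

text \<open>Vector field f(x, xdot, y, ydot) and Jacobi integral E; coordinates ordered
  (x, xdot, y, ydot) as components 1,2,3,4.\<close>
definition vf :: "(real \<Rightarrow> real \<Rightarrow> real) \<Rightarrow> real^4 \<Rightarrow> real^4" where
  "vf Om p = vector [p$2, 2 * p$4 + pd 1 0 Om (p$1) (p$3),
                     p$4, - 2 * p$2 + pd 0 1 Om (p$1) (p$3)]"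

definition jacobi :: "(real \<Rightarrow> real \<Rightarrow> real) \<Rightarrow> real^4 \<Rightarrow> real" where
  "jacobi Om p = - ((p$2)\<^sup>2 + (p$4)\<^sup>2) + 2 * Om (p$1) (p$3)"

definition Lc :: "real \<Rightarrow> real \<Rightarrow> real^4" where
  "Lc x0 y0 = vector [x0, 0, y0, 0]"

definition lam_plus :: "(real \<Rightarrow> real \<Rightarrow> real) \<Rightarrow> real \<Rightarrow> real \<Rightarrow> real" where
  "lam_plus Om x0 y0 = - sqrt (-4 + pd 2 0 Om x0 y0 + pd 0 2 Om x0 y0)"

definition lam_minus :: "(real \<Rightarrow> real \<Rightarrow> real) \<Rightarrow> real \<Rightarrow> real \<Rightarrow> real" where
  "lam_minus Om x0 y0 = sqrt (-4 + pd 2 0 Om x0 y0 + pd 0 2 Om x0 y0)"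

definition vlam :: "(real \<Rightarrow> real \<Rightarrow> real) \<Rightarrow> real \<Rightarrow> real \<Rightarrow> real \<Rightarrow> real^4" where
  "vlam Om x0 y0 l = (let Oxy = pd 1 1 Om x0 y0; Oyy = pd 0 2 Om x0 y0 in
      vector [Oxy + 2*l, l * (Oxy + 2*l), Oyy - 4, l * (Oyy - 4)])"

text \<open>The matrix C whose columns are v0, v1, v+, v-.\<close>
definition Cmat :: "(real \<Rightarrow> real \<Rightarrow> real) \<Rightarrow> real \<Rightarrow> real \<Rightarrow> real^4^4" where
  "Cmat Om x0 y0 = (let Oxx = pd 2 0 Om x0 y0; Oxy = pd 1 1 Om x0 y0; Oyy = pd 0 2 Om x0 y0;
      v0 = vector [Oyy, 0, - Oxy, 0] :: real^4;
      v1 = vector [Oxy, Oyy, 2 - Oxx, - Oxy] :: real^4;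
      vp = vlam Om x0 y0 (lam_plus Om x0 y0);
      vm = vlam Om x0 y0 (lam_minus Om x0 y0)
    in transpose (vector [v0, v1, vp, vm]))"

definition Fvf :: "(real \<Rightarrow> real \<Rightarrow> real) \<Rightarrow> real \<Rightarrow> real \<Rightarrow> real^4 \<Rightarrow> real^4" where
  "Fvf Om x0 y0 z = matrix_inv (Cmat Om x0 y0) *v vf Om (Cmat Om x0 y0 *v z + Lc x0 y0)"

definition Ecal :: "(real \<Rightarrow> real \<Rightarrow> real) \<Rightarrow> real \<Rightarrow> real \<Rightarrow> real^4 \<Rightarrow> real" where
  "Ecal Om x0 y0 z = jacobi Om (Cmat Om x0 y0 *v z + Lc x0 y0)"

text \<open>Formal power series in two variables are represented by their coefficient
  arrays: K i j is the coefficient of x^i y^j.\<close>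

definition trunc2 :: "(nat \<Rightarrow> nat \<Rightarrow> 'a::real_vector) \<Rightarrow> nat \<Rightarrow> real \<Rightarrow> real \<Rightarrow> 'a" where
  "trunc2 K N x y = (\<Sum>a\<le>N. \<Sum>b\<le>N - a. (x ^ a * y ^ b) *\<^sub>R K a b)"

text \<open>Coefficients of the formal composition G o K (G replaced by its Taylor series at 0,
  K without constant term): coefficient (i,j) of the Taylor expansion at 0 of G composed
  with the polynomial truncation of K of degree i+j.\<close>
definition comp2 :: "(real^4 \<Rightarrow> real^4) \<Rightarrow> (nat \<Rightarrow> nat \<Rightarrow> real^4) \<Rightarrow> nat \<Rightarrow> nat \<Rightarrow> real^4" where
  "comp2 G K i j = (\<chi> k. pd i j (\<lambda>x y. G (trunc2 K (i + j) x y) $ k) 0 0 / (fact i * fact j))"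

text \<open>Coefficients of DK(y) r(y) = (d/dx K) r1 + (d/dy K) r2 (formal products).\<close>
definition DKr :: "(nat \<Rightarrow> nat \<Rightarrow> real^4) \<Rightarrow> (nat \<Rightarrow> nat \<Rightarrow> real) \<Rightarrow> (nat \<Rightarrow> nat \<Rightarrow> real)
      \<Rightarrow> nat \<Rightarrow> nat \<Rightarrow> real^4" where
  "DKr K r1 r2 i j = (\<Sum>a\<le>i. \<Sum>b\<le>j.
      (real (a + 1) * r1 (i - a) (j - b)) *\<^sub>R K (a + 1) b
    + (real (b + 1) * r2 (i - a) (j - b)) *\<^sub>R K a (b + 1))"

text \<open>The formal series t \<mapsto> K(h1(t), h2(t)) componentwise, with h1 = sum c_n t^n and h2 = t^3.\<close>
definition K_of_h :: "(nat \<Rightarrow> nat \<Rightarrow> real^4) \<Rightarrow> (nat \<Rightarrow> real) \<Rightarrow> (real fps)^4" where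
  "K_of_h K c = (\<chi> k. Abs_fps (\<lambda>n. fps_nth
      (\<Sum>i\<le>n. \<Sum>j\<le>n. fps_const (K i j $ k) * Abs_fps c ^ i * fps_X ^ (3 * j)) n))"

text \<open>Formal composition of (the Taylor series at 0 of) a scalar function G on R^4 with a
  formal series P in t without constant term: the n-th coefficient is the n-th Taylor
  coefficient at 0 of G composed with the degree-n truncation of P.\<close>
definition comp1 :: "(real^4 \<Rightarrow> real) \<Rightarrow> (real fps)^4 \<Rightarrow> real fps" where
  "comp1 G P = Abs_fps (\<lambda>n. (deriv ^^ n)
      (\<lambda>t. G (\<chi> k. \<Sum>m\<le>n. fps_nth (P $ k) m * t ^ m)) 0 / fact n)"

end

theory Submission
  imports Defs "HOL-Complex_Analysis.Complex_Analysis"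
begin

notation fps_nth (infixl "$$" 75)

definition van :: "nat \<Rightarrow> real fps \<Rightarrow> bool" where
  "van k f \<longleftrightarrow> (\<forall>m<k. f $$ m = 0)"

lemma van_mono: "van k f \<Longrightarrow> j \<le> k \<Longrightarrow> van j f"
  by (auto simp: van_def)
lemma van_0 [simp]: "van 0 f" by (simp add: van_def)
lemma van_zero [simp]: "van k 0" by (simp add: van_def)
lemma van_add: "van k f \<Longrightarrow> van k g \<Longrightarrow> van k (f + g)" by (simp add: van_def)
lemma van_diff: "van k f \<Longrightarrow> van k g \<Longrightarrow> van k (f - g)" by (simp add: van_def)
lemma van_uminus: "van k f \<Longrightarrow> van k (- f)" by (simp add: van_def)
lemma van_cmult: "van k f \<Longrightarrow> van k (fps_const c * f)" by (simp add: van_def)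
lemma van_mult: assumes "van k f" "van l g" shows "van (k + l) (f * g)"
  unfolding van_def
proof (intro allI impI)
  fix n assume n: "n < k + l"
  have "(f * g) $$ n = (\<Sum>i=0..n. f $$ i * g $$ (n - i))" by (rule fps_mult_nth)
  also have "\<dots> = 0"
  proof (rule sum.neutral, intro ballI)
    fix i assume iin: "i \<in> {0..n}"
    show "f $$ i * g $$ (n - i) = 0"
    proof (cases "i < k")
      case True then show ?thesis using assms(1) by (simp add: van_def)
    next
      case False then have "n - i < l" using n iin by auto
      then show ?thesis using assms(2) by (simp add: van_def)
    qed
  qed
  finally show "(f * g) $$ n = 0" .
qed

lemma van_mult_nth: assumes "van k f" "van l g" shows "(f * g) $$ (k + l) = f $$ k * g $$ l"
proof -
  have "(f * g) $$ (k + l) = (\<Sum>i=0..k+l. f $$ i * g $$ (k + l - i))" by (rule fps_mult_nth)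
  also have "\<dots> = (\<Sum>i\<in>{k}. f $$ i * g $$ (k + l - i))"
  proof (rule sum.mono_neutral_right)
    show "\<forall>i\<in>{0..k + l} - {k}. f $$ i * g $$ (k + l - i) = 0"
    proof
      fix i assume i: "i \<in> {0..k + l} - {k}"
      show "f $$ i * g $$ (k + l - i) = 0"
      proof (cases "i < k")
        case True then show ?thesis using assms(1) by (simp add: van_def)
      next
        case False then have "k + l - i < l" using i by auto
        then show ?thesis using assms(2) by (simp add: van_def)
      qed
    qed
  qed auto
  finally show ?thesis by simp
qed

lemma van_power: "van k f \<Longrightarrow> van (i * k) (f ^ i)"
proof (induction i)
  case 0 then show ?case by simp
next
  case (Suc i)
  then have "van (k + i * k) (f * f ^ i)" by (intro van_mult) auto
  then show ?case by (simp add: add.commute)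
qed

lemma van_X_power: "van k (fps_X ^ k)"
  by (simp add: van_def fps_X_power_iff)

lemma van_Suc_iff: "van (Suc k) f \<longleftrightarrow> van k f \<and> f $$ k = 0"
  by (auto simp: van_def less_Suc_eq)

lemma van_sum: "(\<And>i. i \<in> A \<Longrightarrow> van k (f i)) \<Longrightarrow> van k (\<Sum>i\<in>A. f i)"
  by (induction A rule: infinite_finite_induct) (auto intro: van_add)

definition LT :: "nat \<Rightarrow> real \<Rightarrow> real fps \<Rightarrow> bool" where
  "LT k a f \<longleftrightarrow> van (Suc k) (f - fps_const a * fps_X ^ k)"

lemma LT_van: assumes "LT k a f" shows "van k f"
proof -
  have "van k (f - fps_const a * fps_X ^ k)" using assms van_mono unfolding LT_def by fastforce
  moreover have "van k (fps_const a * fps_X ^ k)" by (intro van_cmult van_X_power)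
  ultimately have "van k ((f - fps_const a * fps_X ^ k) + fps_const a * fps_X ^ k)" by (rule van_add)
  then show ?thesis by simp
qed

lemma LT_nth: assumes "LT k a f" shows "f $$ k = a"
  using assms unfolding LT_def van_def by (auto simp: fps_X_power_iff)

lemma LT_iff: "LT k a f \<longleftrightarrow> van k f \<and> f $$ k = a"
proof
  assume "LT k a f" then show "van k f \<and> f $$ k = a" using LT_van LT_nth by blast
next
  assume "van k f \<and> f $$ k = a"
  then show "LT k a f" unfolding LT_def van_def by (auto simp: fps_X_power_iff less_Suc_eq)
qed

lemma LT_zero_iff: "LT k 0 f \<longleftrightarrow> van (Suc k) f"
  by (simp add: LT_iff van_Suc_iff)

lemma LT_add: "LT k a f \<Longrightarrow> LT k b g \<Longrightarrow> LT k (a + b) (f + g)"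
  by (simp add: LT_iff van_add)
lemma LT_diff: "LT k a f \<Longrightarrow> LT k b g \<Longrightarrow> LT k (a - b) (f - g)"
  by (simp add: LT_iff van_diff)
lemma LT_uminus: "LT k a f \<Longrightarrow> LT k (- a) (- f)"
  by (simp add: LT_iff van_uminus)
lemma LT_cmult: "LT k a f \<Longrightarrow> LT k (c * a) (fps_const c * f)"
  by (simp add: LT_iff van_cmult)
lemma LT_mult: assumes "LT k a f" "LT l b g" shows "LT (k + l) (a * b) (f * g)"
  using assms by (simp add: LT_iff van_mult van_mult_nth)
lemma LT_power: "LT k a f \<Longrightarrow> LT (i * k) (a ^ i) (f ^ i)"
proof (induction i)
  case 0 then show ?case by (simp add: LT_iff)
next
  case (Suc i)
  then have "LT (k + i * k) (a * a ^ i) (f * f ^ i)" by (intro LT_mult) auto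
  then show ?case by (simp add: add.commute)
qed
lemma LT_const: "LT 0 c (fps_const c)" by (simp add: LT_iff)
lemma LT_X_power: "LT k 1 (fps_X ^ k)"
proof -
  have "fps_X ^ k $$ k = (1::real)" by (simp add: fps_X_power_iff)
  then show ?thesis using van_X_power LT_iff by blast
qed
lemma LT_cong: "LT k a f \<Longrightarrow> van (Suc k) (g - f) \<Longrightarrow> LT k a g"
proof -
  assume a1: "LT k a f" and a2: "van (Suc k) (g - f)"
  have "van (Suc k) ((g - f) + (f - fps_const a * fps_X ^ k))"
    using a1 a2 unfolding LT_def by (intro van_add)
  then show "LT k a g" unfolding LT_def by simp
qed
lemma LT_zero_mono: "LT k 0 f \<Longrightarrow> j \<le> k \<Longrightarrow> LT j 0 f"
  by (auto simp: LT_zero_iff intro: van_mono)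
lemma LT_eq: "LT k a f \<Longrightarrow> a = b \<Longrightarrow> LT k b f" by simp

definition PV :: "nat \<Rightarrow> nat \<Rightarrow> real fps \<Rightarrow> real fps \<Rightarrow> bool" where
  "PV k N a a' \<longleftrightarrow> van k a \<and> van k a' \<and> van N (a' - a)"

lemma PV_mono: "PV k N a a' \<Longrightarrow> k' \<le> k \<Longrightarrow> N' \<le> N \<Longrightarrow> PV k' N' a a'"
  by (auto simp: PV_def intro: van_mono)
lemma PV_add: "PV k N a a' \<Longrightarrow> PV k N b b' \<Longrightarrow> PV k N (a + b) (a' + b')"
proof -
  assume a: "PV k N a a'" and b: "PV k N b b'"
  have eq: "a' + b' - (a + b) = (a' - a) + (b' - b)" by (simp add: algebra_simps)
  have "van N ((a' - a) + (b' - b))" using a b by (intro van_add) (auto simp: PV_def)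
  then have "van N (a' + b' - (a + b))" by (simp only: eq)
  then show ?thesis using a b by (simp add: PV_def van_add)
qed
lemma PV_diff: "PV k N a a' \<Longrightarrow> PV k N b b' \<Longrightarrow> PV k N (a - b) (a' - b')"
proof -
  assume a: "PV k N a a'" and b: "PV k N b b'"
  have eq: "a' - b' - (a - b) = (a' - a) - (b' - b)" by (simp add: algebra_simps)
  have "van N ((a' - a) - (b' - b))" using a b by (rule_tac van_diff) (auto simp: PV_def)
  then have "van N (a' - b' - (a - b))" by (simp only: eq)
  then show ?thesis using a b by (simp add: PV_def van_diff)
qed
lemma PV_cmult: "PV k N a a' \<Longrightarrow> PV k N (fps_const c * a) (fps_const c * a')"
proof -
  assume a: "PV k N a a'"
  have "fps_const c * a' - fps_const c * a = fps_const c * (a' - a)" by (simp add: algebra_simps)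
  then show ?thesis using a by (simp add: PV_def van_cmult)
qed
lemma PV_mult: assumes "PV k1 N1 a a'" "PV k2 N2 b b'"
  shows "PV (k1 + k2) (min (N1 + k2) (k1 + N2)) (a * b) (a' * b')"
proof -
  have "a' * b' - a * b = (a' - a) * b' + a * (b' - b)" by (simp add: algebra_simps)
  moreover have "van (N1 + k2) ((a' - a) * b')" using assms by (intro van_mult) (auto simp: PV_def)
  moreover have "van (k1 + N2) (a * (b' - b))" using assms by (intro van_mult) (auto simp: PV_def)
  ultimately have "van (min (N1 + k2) (k1 + N2)) ((a' - a) * b' + a * (b' - b))"
    by (intro van_add) (auto elim: van_mono)
  then have "van (min (N1 + k2) (k1 + N2)) (a' * b' - a * b)"
    by (simp only: \<open>a' * b' - a * b = (a' - a) * b' + a * (b' - b)\<close>)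
  then show ?thesis using assms by (auto simp: PV_def intro: van_mult)
qed
lemma PV_power: assumes "PV k N a a'" "i \<ge> 1" "k \<le> N"
  shows "PV (i * k) ((i - 1) * k + N) (a ^ i) (a' ^ i)"
  using assms(2)
proof (induction i rule: dec_induct)
  case base then show ?case using assms(1) by simp
next
  case (step i)
  have "PV (k + i * k) (min (N + i * k) (k + ((i - 1) * k + N))) (a * a ^ i) (a' * a' ^ i)"
    by (rule PV_mult[OF assms(1) step.IH])
  moreover have "min (N + i * k) (k + ((i - 1) * k + N)) = (Suc i - 1) * k + N"
    using step.hyps by (cases i) (auto simp: algebra_simps)
  ultimately show ?case by (simp add: add.commute)
qed
lemma PV_refl_van: "van k a \<Longrightarrow> PV k N a a"
  by (simp add: PV_def)

lemma real_restrict_deriv: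
  fixes g :: "complex \<Rightarrow> complex" and f :: "real \<Rightarrow> real"
  assumes hol: "g holomorphic_on S" "open S" and U: "open U" "\<And>t. t \<in> U \<Longrightarrow> of_real t \<in> S"
    and eq: "\<And>t. t \<in> U \<Longrightarrow> g (of_real t) = of_real (f t)"
  shows "t \<in> U \<Longrightarrow> (deriv ^^ n) f t = Re ((deriv ^^ n) g (of_real t))"
proof (induction n arbitrary: t)
  case 0 then show ?case using eq by simp
next
  case (Suc n)
  have h: "(deriv ^^ n) g holomorphic_on S" using hol by (rule holomorphic_higher_deriv)
  have d1: "((deriv ^^ n) g has_field_derivative deriv ((deriv ^^ n) g) (of_real t)) (at (of_real t))"
    using holomorphic_derivI[OF h hol(2) U(2)[OF Suc.prems]] .
  have "((\<lambda>x. (deriv ^^ n) g (of_real x)) has_vector_derivative deriv ((deriv ^^ n) g) (of_real t)) (at t)"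
    by (rule has_vector_derivative_real_field[OF d1])
  then have d2: "((\<lambda>x. Re ((deriv ^^ n) g (of_real x))) has_real_derivative Re (deriv ((deriv ^^ n) g) (of_real t))) (at t)"
    by (rule has_field_derivative_Re)
  have d3: "((deriv ^^ n) f has_real_derivative Re (deriv ((deriv ^^ n) g) (of_real t))) (at t)"
    by (rule has_field_derivative_transform_within_open[OF d2 U(1) Suc.prems]) (simp add: Suc.IH)
  then have "deriv ((deriv ^^ n) f) t = Re (deriv ((deriv ^^ n) g) (of_real t))" by (rule DERIV_imp_deriv)
  then show ?case by simp
qed

definition cof :: "real fps \<Rightarrow> complex fps" where
  "cof F = Abs_fps (\<lambda>n. complex_of_real (F $$ n))"

lemma cof_nth [simp]: "cof F $$ n = of_real (F $$ n)" by (simp add: cof_def)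
lemma cof_add [simp]: "cof (F + G) = cof F + cof G" by (simp add: fps_eq_iff)
lemma cof_diff [simp]: "cof (F - G) = cof F - cof G" by (simp add: fps_eq_iff)
lemma cof_uminus [simp]: "cof (- F) = - cof F" by (simp add: fps_eq_iff)
lemma cof_const [simp]: "cof (fps_const c) = fps_const (of_real c)"
  by (simp add: fps_eq_iff)
lemma cof_0 [simp]: "cof 0 = 0" by (simp add: fps_eq_iff)
lemma cof_1 [simp]: "cof 1 = 1" by (simp add: fps_eq_iff fps_one_nth)
lemma cof_X [simp]: "cof fps_X = fps_X" by (simp add: fps_eq_iff fps_X_nth)
lemma cof_mult [simp]: "cof (F * G) = cof F * cof G"
  by (simp add: fps_eq_iff fps_mult_nth)
lemma cof_power [simp]: "cof (F ^ n) = cof F ^ n"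
  by (induction n) simp_all
lemma cof_numeral [simp]: "cof (numeral k) = numeral k"
  by (simp add: numeral_fps_const)
lemma cof_sum [simp]: "cof (\<Sum>i\<in>A. f i) = (\<Sum>i\<in>A. cof (f i))"
  by (induction A rule: infinite_finite_induct) simp_all
lemma cof_compose: "cof (a oo b) = cof a oo cof b"
  by (simp add: fps_eq_iff fps_compose_nth cof_power[symmetric] del: cof_power)
lemma cof_binomial: "cof (fps_binomial c) = fps_binomial (of_real c)"
  by (simp add: fps_eq_iff gbinomial_prod_rev of_real_prod)

definition RH :: "(real \<Rightarrow> real) \<Rightarrow> real fps \<Rightarrow> bool" where
  "RH f F \<longleftrightarrow> (\<exists>g. g has_fps_expansion cof F \<and> eventually (\<lambda>t. g (of_real t) = of_real (f t)) (nhds 0))"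

lemma RH_const: "RH (\<lambda>_. c) (fps_const c)"
  unfolding RH_def by (rule exI[of _ "\<lambda>_. of_real c"]) auto

lemma RH_X: "RH (\<lambda>t. t) fps_X"
  unfolding RH_def by (rule exI[of _ "\<lambda>z. z"]) (auto intro: has_fps_expansion_fps_X)

lemma RH_add: assumes "RH f F" "RH g G" shows "RH (\<lambda>t. f t + g t) (F + G)"
proof -
  obtain f' where f': "f' has_fps_expansion cof F" "eventually (\<lambda>t. f' (of_real t) = of_real (f t)) (nhds 0)"
    using assms(1) unfolding RH_def by blast
  obtain g' where g': "g' has_fps_expansion cof G" "eventually (\<lambda>t. g' (of_real t) = of_real (g t)) (nhds 0)"
    using assms(2) unfolding RH_def by blast
  show ?thesis unfolding RH_def
    apply (rule exI[of _ "\<lambda>z. f' z + g' z"])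
    using has_fps_expansion_add[OF f'(1) g'(1)] eventually_conj[OF f'(2) g'(2)]
    by (auto elim!: eventually_mono)
qed

lemma RH_mult: assumes "RH f F" "RH g G" shows "RH (\<lambda>t. f t * g t) (F * G)"
proof -
  obtain f' where f': "f' has_fps_expansion cof F" "eventually (\<lambda>t. f' (of_real t) = of_real (f t)) (nhds 0)"
    using assms(1) unfolding RH_def by blast
  obtain g' where g': "g' has_fps_expansion cof G" "eventually (\<lambda>t. g' (of_real t) = of_real (g t)) (nhds 0)"
    using assms(2) unfolding RH_def by blast
  show ?thesis unfolding RH_def
    apply (rule exI[of _ "\<lambda>z. f' z * g' z"])
    using has_fps_expansion_mult[OF f'(1) g'(1)] eventually_conj[OF f'(2) g'(2)]
    by (auto elim!: eventually_mono)
qed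

lemma RH_uminus: assumes "RH f F" shows "RH (\<lambda>t. - f t) (- F)"
proof -
  obtain f' where f': "f' has_fps_expansion cof F" "eventually (\<lambda>t. f' (of_real t) = of_real (f t)) (nhds 0)"
    using assms(1) unfolding RH_def by blast
  show ?thesis unfolding RH_def
    apply (rule exI[of _ "\<lambda>z. - f' z"])
    using has_fps_expansion_minus[OF f'(1)] f'(2)
    by (auto elim!: eventually_mono)
qed

lemma RH_diff: assumes "RH f F" "RH g G" shows "RH (\<lambda>t. f t - g t) (F - G)"
  using RH_add[OF assms(1) RH_uminus[OF assms(2)]] by simp

lemma RH_power: assumes "RH f F" shows "RH (\<lambda>t. f t ^ n) (F ^ n)"
proof (induction n)
  case 0 then show ?case using RH_const[of 1] by simp
next
  case (Suc n) then show ?case using RH_mult[OF assms Suc] by simp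
qed

lemma RH_sum: assumes "finite A" "\<And>i. i \<in> A \<Longrightarrow> RH (f i) (F i)"
  shows "RH (\<lambda>t. \<Sum>i\<in>A. f i t) (\<Sum>i\<in>A. F i)"
  using assms
proof (induction A rule: finite_induct)
  case empty then show ?case using RH_const[of 0] by simp
next
  case (insert x A) then show ?case using RH_add[of "f x" "F x"] by simp
qed

lemma RH_cong: "RH f F \<Longrightarrow> (\<And>t. f t = g t) \<Longrightarrow> F = G \<Longrightarrow> RH g G"
proof -
  assume "RH f F" "\<And>t. f t = g t" "F = G"
  moreover have "f = g" using \<open>\<And>t. f t = g t\<close> by auto
  ultimately show ?thesis by simp
qed

lemma RH_coeff: assumes "RH f F" shows "(deriv ^^ n) f 0 / fact n = F $$ n"
proof -
  obtain g where G: "g has_fps_expansion cof F" and ev: "eventually (\<lambda>t. g (of_real t) = of_real (f t)) (nhds 0)"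
    using assms unfolding RH_def by blast
  obtain S where S: "open S" "0 \<in> S" "g holomorphic_on S"
    using has_fps_expansion_imp_holomorphic[OF G] by blast
  obtain V where V: "open V" "0 \<in> V" "\<And>t. t \<in> V \<Longrightarrow> g (of_real t) = of_real (f t)"
    using ev unfolding eventually_nhds by blast
  define U where "U = V \<inter> (of_real -` S :: real set)"
  have "open (of_real -` S :: real set)"
    by (rule open_vimage[OF S(1)]) (intro continuous_intros)
  then have oU: "open U" using V(1) by (simp add: U_def open_Int)
  have "(deriv ^^ n) f 0 = Re ((deriv ^^ n) g (of_real 0))"
    by (rule real_restrict_deriv[OF S(3) S(1) oU]) (use V S in \<open>auto simp: U_def\<close>)
  moreover have "cof F $$ n = (deriv ^^ n) g 0 / fact n" by (rule fps_nth_fps_expansion[OF G])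
  ultimately show ?thesis
    by (metis Re_complex_of_real Re_divide_of_real cof_nth of_real_0 of_real_fact)
qed

definition InvSqrt :: "real fps \<Rightarrow> real fps" where
  "InvSqrt F = fps_const (1 / sqrt (F $$ 0)) * (fps_binomial (-1/2) oo (fps_const (1 / F $$ 0) * F - 1))"

lemma RH_invsqrt: assumes "RH f F" "F $$ 0 > 0" shows "RH (\<lambda>t. 1 / sqrt (f t)) (InvSqrt F)"
proof -
  define D where "D = F $$ 0"
  have D: "D > 0" using assms(2) by (simp add: D_def)
  obtain g where G: "g has_fps_expansion cof F" and ev: "eventually (\<lambda>t. g (of_real t) = of_real (f t)) (nhds 0)"
    using assms unfolding RH_def by blast
  define h where "h = (\<lambda>z. g z * of_real (1 / D) - 1)"
  have H: "h has_fps_expansion cof F * fps_const (of_real (1 / D)) - 1"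
    unfolding h_def by (intro has_fps_expansion_diff has_fps_expansion_cmult_right G has_fps_expansion_1)
  have H0: "(cof F * fps_const (of_real (1 / D)) - 1) $$ 0 = 0"
    using D by (simp add: D_def)
  have C: "((\<lambda>x. (1 + x) powr (-1/2 :: complex)) \<circ> h) has_fps_expansion
      (fps_binomial (-1/2) oo (cof F * fps_const (of_real (1 / D)) - 1))"
    by (rule has_fps_expansion_compose[OF has_fps_expansion_binomial_complex H H0])
  define g' where "g' = (\<lambda>z. of_real (1 / sqrt D) * ((\<lambda>x. (1 + x) powr (-1/2 :: complex)) \<circ> h) z)"
  have G': "g' has_fps_expansion cof (InvSqrt F)"
    unfolding g'_def
    apply (rule has_fps_expansion_schematicI[OF has_fps_expansion_cmult_left[OF C]])
    by (simp add: InvSqrt_def cof_compose cof_binomial D_def mult.commute)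
  have g0: "g 0 = of_real D"
    using has_fps_expansion_imp_0_eq_fps_nth_0[OF G] by (simp add: D_def)
  have cont: "continuous (at 0) g"
    using has_fps_expansion_imp_continuous[OF G, of UNIV] by simp
  have c1: "isCont (\<lambda>t::real. complex_of_real t) 0" by (intro continuous_intros)
  have c2: "isCont (g \<circ> complex_of_real) 0" using continuous_at_compose[OF c1, of g] cont by simp
  have c3: "isCont (\<lambda>z. Re z) ((g \<circ> complex_of_real) 0)"
    by (simp add: bounded_linear.isCont bounded_linear_Re)
  have "isCont ((\<lambda>z. Re z) \<circ> (g \<circ> complex_of_real)) 0" by (rule continuous_at_compose[OF c2 c3])
  then have "isCont (\<lambda>t::real. Re (g (of_real t))) 0" by (simp add: o_def)
  then have "((\<lambda>t::real. Re (g (of_real t))) \<longlongrightarrow> D) (at 0)"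
    using g0 by (simp add: isCont_def)
  then have "eventually (\<lambda>t. Re (g (of_real t)) > 0) (at 0)"
    using D by (rule order_tendstoD(1))
  then have evpos: "eventually (\<lambda>t::real. Re (g (of_real t)) > 0) (nhds 0)"
    using D g0 by (simp add: eventually_nhds_conv_at)
  have "eventually (\<lambda>t. g' (of_real t) = of_real (1 / sqrt (f t))) (nhds 0)"
    using eventually_conj[OF ev evpos]
  proof (rule eventually_mono)
    fix t assume a: "g (of_real t) = of_real (f t) \<and> 0 < Re (g (of_real t))"
    then have ft: "f t > 0" by (metis Re_complex_of_real)
    have "g' (of_real t) = of_real (1 / sqrt D) * (of_real (f t / D)) powr (of_real (-1/2))"
      using a by (simp add: g'_def h_def)
    also have "\<dots> = of_real (1 / sqrt D * (f t / D) powr (-1/2))"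
    proof -
      have e: "(of_real (f t / D) :: complex) powr (of_real (-1/2)) = of_real ((f t / D) powr (-1/2))"
        using ft D by (intro powr_of_real) simp
      show ?thesis by (simp only: e of_real_mult)
    qed
    also have "1 / sqrt D * (f t / D) powr (-1/2) = 1 / sqrt (f t)"
    proof -
      have "(f t / D) powr (-1/2) = inverse ((f t / D) powr (1/2))"
        by (simp add: powr_minus[symmetric])
      also have "\<dots> = inverse (sqrt (f t / D))" using ft D by (simp add: powr_half_sqrt)
      finally show ?thesis using ft D by (simp add: real_sqrt_divide field_simps)
    qed
    finally show "g' (of_real t) = of_real (1 / sqrt (f t))" .
  qed
  then show ?thesis unfolding RH_def using G' by blast
qed

definition PsiF :: "(nat \<Rightarrow> real) \<Rightarrow> (nat \<Rightarrow> real) \<Rightarrow> (nat \<Rightarrow> real) \<Rightarrow> real \<Rightarrow> real \<Rightarrow>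
    real fps \<Rightarrow> real fps \<Rightarrow> real fps \<Rightarrow> real fps \<Rightarrow> real fps" where
  "PsiF m px py x0 y0 p1 p2 p3 p4 = - (p2^2 + p4^2) + 2 * (fps_const (1/2) * ((fps_const x0 + p1)^2 + (fps_const y0 + p3)^2)
     + (\<Sum>j\<in>{1,2,3}. fps_const (m j) * InvSqrt ((fps_const x0 + p1 - fps_const (px j))^2 + (fps_const y0 + p3 - fps_const (py j))^2)))"

lemma RH_numeral: "RH (\<lambda>_. numeral k) (numeral k)"
  using RH_const[of "numeral k"] by (simp add: numeral_fps_const)

lemma RH_PsiF:
  assumes "RH f1 p1" "RH f2 p2" "RH f3 p3" "RH f4 p4" "p1 $$ 0 = 0" "p3 $$ 0 = 0"
    "\<And>j. j \<in> {1,2,3} \<Longrightarrow> (x0 - px j)^2 + (y0 - py j)^2 > 0"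
  shows "RH (\<lambda>t. - (f2 t^2 + f4 t^2) + 2 * (1/2 * ((x0 + f1 t)^2 + (y0 + f3 t)^2)
     + (\<Sum>j\<in>{1,2,3}. m j * (1 / sqrt ((x0 + f1 t - px j)^2 + (y0 + f3 t - py j)^2)))))
    (PsiF m px py x0 y0 p1 p2 p3 p4)"
  unfolding PsiF_def
proof (intro RH_add RH_uminus RH_mult RH_power RH_numeral RH_const RH_sum RH_invsqrt RH_diff assms(1-4))
  fix j :: nat assume "j \<in> {1,2,3}"
  then show "0 < ((fps_const x0 + p1 - fps_const (px j))\<^sup>2 + (fps_const y0 + p3 - fps_const (py j))\<^sup>2) $$ 0"
    using assms(5,6,7) by (simp add: fps_nth_power_0)
qed simp

definition trunc :: "real fps \<Rightarrow> nat \<Rightarrow> real fps" where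
  "trunc F n = (\<Sum>i=0..n. fps_const (F $$ i) * fps_X ^ i)"

lemma trunc_nth: "trunc F n $$ k = (if k \<le> n then F $$ k else 0)"
  unfolding trunc_def by (rule fps_sum_rep_nth)

lemma van_trunc: "van (Suc n) (trunc F n - F)"
  by (simp add: van_def trunc_nth)

lemma RH_trunc: "RH (\<lambda>t. \<Sum>i=0..n. F $$ i * t ^ i) (trunc F n)"
  unfolding trunc_def by (intro RH_sum RH_mult RH_const RH_power RH_X) auto

lemma van_mult_cong: "van N (a - a') \<Longrightarrow> van N (b - b') \<Longrightarrow> van N (a * b - a' * b')"
proof -
  assume A: "van N (a - a')" and B: "van N (b - b')"
  have "a * b - a' * b' = (a - a') * b + a' * (b - b')" by (simp add: algebra_simps)
  moreover have "van N ((a - a') * b + a' * (b - b'))"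
    using van_mult[OF A van_0[of b]] van_mult[OF van_0[of a'] B] by (intro van_add) simp_all
  ultimately show ?thesis by simp
qed

lemma van_add_cong: "van N (a - a') \<Longrightarrow> van N (b - b') \<Longrightarrow> van N ((a + b) - (a' + b'))"
proof -
  assume "van N (a - a')" "van N (b - b')"
  then have "van N ((a - a') + (b - b'))" by (rule van_add)
  then show ?thesis by (simp add: algebra_simps)
qed

lemma van_diff_cong: "van N (a - a') \<Longrightarrow> van N (b - b') \<Longrightarrow> van N ((a - b) - (a' - b'))"
proof -
  assume "van N (a - a')" "van N (b - b')"
  then have "van N ((a - a') - (b - b'))" by (rule van_diff)
  then show ?thesis by (simp add: algebra_simps)
qed

lemma van_uminus_cong: "van N (a - a') \<Longrightarrow> van N ((- a) - (- a'))"
proof -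
  assume "van N (a - a')"
  then have "van N (- (a - a'))" by (rule van_uminus)
  then show ?thesis by (simp add: algebra_simps)
qed

lemma van_refl: "van N (a - a)" by simp

lemma van_power_cong: "van N (a - a') \<Longrightarrow> van N (a ^ i - a' ^ i)"
  by (induction i) (auto intro: van_mult_cong)

lemma van_sum_cong: "(\<And>i. i \<in> A \<Longrightarrow> van N (f i - g i)) \<Longrightarrow> van N (sum f A - sum g A)"
proof -
  assume "\<And>i. i \<in> A \<Longrightarrow> van N (f i - g i)"
  then have "van N (\<Sum>i\<in>A. f i - g i)" by (rule van_sum)
  then show ?thesis by (simp add: sum_subtractf)
qed

lemma van_compose_cong:
  assumes "b $$ 0 = 0" "b' $$ 0 = 0" "van N (b - b')"
  shows "van N ((a oo b) - (a oo b'))"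
  unfolding van_def
proof (intro allI impI)
  fix n assume n: "n < N"
  have "\<And>i. (b ^ i) $$ n = (b' ^ i) $$ n"
  proof -
    fix i show "(b ^ i) $$ n = (b' ^ i) $$ n"
    proof (cases "i = 0")
      case True then show ?thesis by simp
    next
      case False
      have "PV 0 N b' b" using assms(3) by (simp add: PV_def)
      then have "PV (i * 0) ((i - 1) * 0 + N) (b' ^ i) (b ^ i)"
        using False by (intro PV_power) auto
      then show ?thesis using n by (simp add: PV_def van_def)
    qed
  qed
  then show "((a oo b) - (a oo b')) $$ n = 0" by (simp add: fps_compose_nth)
qed

lemma van_InvSqrt_cong:
  assumes "van (Suc n) (F - F')" "F $$ 0 \<noteq> 0"
  shows "van (Suc n) (InvSqrt F - InvSqrt F')"
proof -
  have F0: "F' $$ 0 = F $$ 0" using assms(1) by (simp add: van_def)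
  have "van (Suc n) ((fps_binomial (-1/2) oo (fps_const (1 / F $$ 0) * F - 1))
                  - (fps_binomial (-1/2) oo (fps_const (1 / F $$ 0) * F' - 1)))"
  proof (rule van_compose_cong)
    show "(fps_const (1 / F $$ 0) * F - 1) $$ 0 = 0" using assms(2) by simp
    show "(fps_const (1 / F $$ 0) * F' - 1) $$ 0 = 0" using assms(2) F0 by simp
    have "van (Suc n) (fps_const (1 / F $$ 0) * (F - F'))" using assms(1) by (rule van_cmult)
    then show "van (Suc n) (fps_const (1 / F $$ 0) * F - 1 - (fps_const (1 / F $$ 0) * F' - 1))"
      by (simp add: algebra_simps)
  qed
  then have "van (Suc n) (fps_const (1 / sqrt (F $$ 0)) * ((fps_binomial (-1/2) oo (fps_const (1 / F $$ 0) * F - 1))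
                  - (fps_binomial (-1/2) oo (fps_const (1 / F $$ 0) * F' - 1))))"
    by (rule van_cmult)
  then show ?thesis unfolding InvSqrt_def F0 by (simp add: algebra_simps)
qed

lemma van_PsiF_cong:
  assumes "van (Suc n) (p1 - q1)" "van (Suc n) (p2 - q2)" "van (Suc n) (p3 - q3)" "van (Suc n) (p4 - q4)"
    "p1 $$ 0 = 0" "p3 $$ 0 = 0"
    "\<And>j. j \<in> {1,2,3} \<Longrightarrow> (x0 - px j)^2 + (y0 - py j)^2 > 0"
  shows "van (Suc n) (PsiF m px py x0 y0 p1 p2 p3 p4 - PsiF m px py x0 y0 q1 q2 q3 q4)"
  unfolding PsiF_def
proof (intro van_add_cong van_uminus_cong van_mult_cong van_power_cong van_refl van_sum_cong
    van_InvSqrt_cong van_diff_cong assms(1-4))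
  fix j :: nat assume "j \<in> {1,2,3}"
  then show "((fps_const x0 + p1 - fps_const (px j))\<^sup>2 + (fps_const y0 + p3 - fps_const (py j))\<^sup>2) $$ 0 \<noteq> 0"
    using assms(5,6) assms(7)[of j] by (simp add: fps_nth_power_0) (metis less_irrefl diff_self power_zero_numeral add_0)
qed

definition Pc :: "real^4^4 \<Rightarrow> (real fps)^4 \<Rightarrow> 4 \<Rightarrow> real fps" where
  "Pc C Z i = (\<Sum>k\<in>UNIV. fps_const (C $ i $ k) * Z $ k)"

lemma Pc_nth: fixes Z :: "real fps ^ 4" shows "Pc C Z i $$ n = (\<Sum>k\<in>UNIV. C $ i $ k * (Z $ k) $$ n)"
  by (simp add: Pc_def fps_sum_nth)

lemma Lc_nth: "Lc x0 y0 $ 1 = x0" "Lc x0 y0 $ 2 = 0" "Lc x0 y0 $ 3 = y0" "Lc x0 y0 $ 4 = 0"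
  by (simp_all add: Lc_def vector_def)

lemma matvec_poly:
  fixes Z :: "real fps ^ 4"
  shows "(C *v (\<chi> k. \<Sum>m\<le>n. (Z $ k) $$ m * t ^ m)) $ i = (\<Sum>m=0..n. Pc C Z i $$ m * t ^ m)"
proof -
  have "(C *v (\<chi> k. \<Sum>m\<le>n. (Z $ k) $$ m * t ^ m)) $ i = (\<Sum>k\<in>UNIV. C $ i $ k * (\<Sum>m\<le>n. (Z $ k) $$ m * t ^ m))"
    by (simp add: matrix_vector_mult_def)
  also have "\<dots> = (\<Sum>k\<in>UNIV. \<Sum>m\<le>n. C $ i $ k * (Z $ k) $$ m * t ^ m)"
    by (simp add: sum_distrib_left mult.assoc)
  also have "\<dots> = (\<Sum>m\<le>n. \<Sum>k\<in>UNIV. C $ i $ k * (Z $ k) $$ m * t ^ m)"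
    by (rule sum.swap)
  also have "\<dots> = (\<Sum>m=0..n. Pc C Z i $$ m * t ^ m)"
    by (simp add: Pc_nth sum_distrib_right atLeast0AtMost)
  finally show ?thesis .
qed

theorem comp1_eq_PsiF:
  fixes C :: "real^4^4" and Z :: "real fps ^ 4"
  assumes Z0: "\<And>k. (Z $ k) $$ 0 = 0"
    and D: "\<And>j. j \<in> {1,2,3} \<Longrightarrow> (x0 - px j)^2 + (y0 - py j)^2 > 0"
  shows "comp1 (\<lambda>z. jacobi (Omega m px py) (C *v z + Lc x0 y0)) Z
       = PsiF m px py x0 y0 (Pc C Z 1) (Pc C Z 2) (Pc C Z 3) (Pc C Z 4)"
proof (rule fps_ext)
  fix n
  define f where "f i t = (\<Sum>m=0..n. Pc C Z i $$ m * t ^ m)" for i t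
  define T where "T i = trunc (Pc C Z i) n" for i
  have P0: "Pc C Z i $$ 0 = 0" for i by (simp add: Pc_nth Z0)
  have fun_eq: "(\<lambda>t. jacobi (Omega m px py) (C *v (\<chi> k. \<Sum>m\<le>n. (Z $ k) $$ m * t ^ m) + Lc x0 y0))
    = (\<lambda>t. - (f 2 t^2 + f 4 t^2) + 2 * (1/2 * ((x0 + f 1 t)^2 + (y0 + f 3 t)^2)
     + (\<Sum>j\<in>{1,2,3}. m j * (1 / sqrt ((x0 + f 1 t - px j)^2 + (y0 + f 3 t - py j)^2)))))"
    by (rule ext) (simp add: jacobi_def Omega_def matvec_poly f_def Lc_nth add.commute)
  have RHf: "RH (\<lambda>t. - (f 2 t^2 + f 4 t^2) + 2 * (1/2 * ((x0 + f 1 t)^2 + (y0 + f 3 t)^2)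
     + (\<Sum>j\<in>{1,2,3}. m j * (1 / sqrt ((x0 + f 1 t - px j)^2 + (y0 + f 3 t - py j)^2)))))
     (PsiF m px py x0 y0 (T 1) (T 2) (T 3) (T 4))"
    by (rule RH_PsiF) (auto simp: f_def T_def RH_trunc trunc_nth P0 D)
  have "comp1 (\<lambda>z. jacobi (Omega m px py) (C *v z + Lc x0 y0)) Z $$ n
      = (deriv ^^ n) (\<lambda>t. jacobi (Omega m px py) (C *v (\<chi> k. \<Sum>m\<le>n. (Z $ k) $$ m * t ^ m) + Lc x0 y0)) 0 / fact n"
    by (simp add: comp1_def)
  also have "\<dots> = PsiF m px py x0 y0 (T 1) (T 2) (T 3) (T 4) $$ n"
    unfolding fun_eq by (rule RH_coeff[OF RHf])
  also have "\<dots> = PsiF m px py x0 y0 (Pc C Z 1) (Pc C Z 2) (Pc C Z 3) (Pc C Z 4) $$ n"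
  proof -
    have "van (Suc n) (PsiF m px py x0 y0 (T 1) (T 2) (T 3) (T 4) - PsiF m px py x0 y0 (Pc C Z 1) (Pc C Z 2) (Pc C Z 3) (Pc C Z 4))"
      by (rule van_PsiF_cong) (auto simp: T_def van_trunc trunc_nth P0 D)
    then show ?thesis by (simp add: van_def)
  qed
  finally show "comp1 (\<lambda>z. jacobi (Omega m px py) (C *v z + Lc x0 y0)) Z $$ n
      = PsiF m px py x0 y0 (Pc C Z 1) (Pc C Z 2) (Pc C Z 3) (Pc C Z 4) $$ n" .
qed

lemmas fsplit = fps_const_add[symmetric] fps_const_mult[symmetric] fps_const_power[symmetric]
  fps_const_neg[symmetric] fps_const_sub[symmetric] numeral_fps_const[symmetric]

definition bc :: "nat \<Rightarrow> real" where "bc k = (-1/2::real) gchoose k"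

lemma bc_vals: "bc 0 = 1" "bc 1 = -1/2" "bc 2 = 3/8" "bc 3 = -5/16"
  by (simp_all add: bc_def gbinomial_prod_rev numeral_eq_Suc atLeast0_lessThan_Suc)

definition Tail :: "real fps \<Rightarrow> real fps" where
  "Tail w = Abs_fps (\<lambda>n. \<Sum>i\<in>{4..n}. bc i * (w ^ i) $$ n)"

lemma power_nth_high: fixes w :: "real fps" shows "w $$ 0 = 0 \<Longrightarrow> n < i \<Longrightarrow> (w ^ i) $$ n = 0"
proof -
  assume w: "w $$ 0 = 0" and n: "n < i"
  have "van 1 w" using w by (simp add: van_def)
  then have "van (i * 1) (w ^ i)" by (rule van_power)
  then show ?thesis using n by (simp add: van_def)
qed

lemma Bn_split:
  assumes w: "w $$ 0 = 0"
  shows "fps_binomial (-1/2) oo w = 1 + fps_const (bc 1) * w + fps_const (bc 2) * w^2 + fps_const (bc 3) * w^3 + Tail w"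
proof (rule fps_ext)
  fix n
  define f where "f i = bc i * (w ^ i) $$ n" for i
  have "(fps_binomial (-1/2) oo w) $$ n = (\<Sum>i\<in>{0..n}. f i)"
    by (simp add: fps_compose_nth f_def bc_def)
  also have "\<dots> = (\<Sum>i\<in>{0..n} \<union> {..<4}. f i)"
    by (rule sum.mono_neutral_left) (auto simp: f_def power_nth_high[OF w])
  also have "{0..n} \<union> {..<4} = {..<4} \<union> {4..n}" by auto
  also have "(\<Sum>i\<in>{..<4} \<union> {4..n}. f i) = (\<Sum>i\<in>{..<4}. f i) + (\<Sum>i\<in>{4..n}. f i)"
    by (rule sum.union_disjoint) auto
  also have "(\<Sum>i\<in>{..<4}. f i) = f 0 + f 1 + f 2 + f 3"
    by (simp add: numeral_eq_Suc lessThan_Suc)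
  finally show "(fps_binomial (-1/2) oo w) $$ n = (1 + fps_const (bc 1) * w + fps_const (bc 2) * w^2 + fps_const (bc 3) * w^3 + Tail w) $$ n"
    by (simp add: f_def Tail_def bc_vals(1))
qed

definition Rj :: "real \<Rightarrow> real \<Rightarrow> real \<Rightarrow> real fps \<Rightarrow> real fps \<Rightarrow> real fps" where
  "Rj A B D p q = (let L = fps_const (2*A) * p + fps_const (2*B) * q; Qd = p^2 + q^2 in
     fps_const (bc 2 * (1/D)^2) * Qd^2 + fps_const (bc 3 * (1/D)^3) * (3 * L^2 * Qd + 3 * L * Qd^2 + Qd^3)
     + Tail (fps_const (1/D) * (L + Qd)))"

definition Poly3 :: "(nat \<Rightarrow> nat \<Rightarrow> real) \<Rightarrow> real fps \<Rightarrow> real fps \<Rightarrow> real fps" where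
  "Poly3 w p q = fps_const (w 1 0) * p + fps_const (w 0 1) * q + fps_const (w 2 0) * p^2
     + fps_const (w 1 1) * (p * q) + fps_const (w 0 2) * q^2 + fps_const (w 3 0) * p^3
     + fps_const (w 2 1) * (p^2 * q) + fps_const (w 1 2) * (p * q^2) + fps_const (w 0 3) * q^3"

lemma Poly3_add: "Poly3 (\<lambda>i k. a i k + b i k) p q = Poly3 a p q + Poly3 b p q"
  by (simp only: Poly3_def fsplit) algebra
lemma Poly3_cmult: "Poly3 (\<lambda>i k. c * a i k) p q = fps_const c * Poly3 a p q"
  by (simp only: Poly3_def fsplit) algebra
lemma Poly3_sum: "Poly3 (\<lambda>i k. \<Sum>j\<in>J. f j i k) p q = (\<Sum>j\<in>J. Poly3 (f j) p q)"
proof (induction J rule: infinite_finite_induct)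
  case (infinite A) then show ?case by (simp add: Poly3_def)
next
  case empty then show ?case by (simp add: Poly3_def)
next
  case (insert x F) then show ?case using Poly3_add[of "f x" "\<lambda>i k. \<Sum>j\<in>F. f j i k" p q] by simp
qed

definition wj :: "nat \<Rightarrow> nat \<Rightarrow> real \<Rightarrow> real \<Rightarrow> real \<Rightarrow> real" where
  "wj i k A B D = (let s = 1 / sqrt D; iD = 1 / D in
     if i = 1 \<and> k = 0 then s*bc 1*iD*2*A
     else if i = 0 \<and> k = 1 then s*bc 1*iD*2*B
     else if i = 2 \<and> k = 0 then s*(bc 1*iD + bc 2*iD^2*4*A^2)
     else if i = 1 \<and> k = 1 then s*bc 2*iD^2*8*A*B
     else if i = 0 \<and> k = 2 then s*(bc 1*iD + bc 2*iD^2*4*B^2)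
     else if i = 3 \<and> k = 0 then s*(bc 2*iD^2*4*A + bc 3*iD^3*8*A^3)
     else if i = 2 \<and> k = 1 then s*(bc 2*iD^2*4*B + bc 3*iD^3*24*A^2*B)
     else if i = 1 \<and> k = 2 then s*(bc 2*iD^2*4*A + bc 3*iD^3*24*A*B^2)
     else if i = 0 \<and> k = 3 then s*(bc 2*iD^2*4*B + bc 3*iD^3*8*B^3)
     else 0)"

lemma InvSqrt_decomp:
  assumes p0: "p $$ 0 = 0" and q0: "q $$ 0 = 0" and D: "A^2 + B^2 > 0"
  shows "InvSqrt ((fps_const A + p)^2 + (fps_const B + q)^2)
    = fps_const (1 / sqrt (A^2 + B^2)) + Poly3 (\<lambda>i k. wj i k A B (A^2 + B^2)) p q
      + fps_const (1 / sqrt (A^2 + B^2)) * Rj A B (A^2 + B^2) p q"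
proof -
  define D' where "D' = A^2 + B^2"
  define s where "s = 1 / sqrt D'"
  define iD where "iD = 1 / D'"
  define L where "L = fps_const (2*A) * p + fps_const (2*B) * q"
  define Qd where "Qd = p^2 + q^2"
  define F where "F = (fps_const A + p)^2 + (fps_const B + q)^2"
  define w where "w = fps_const iD * (L + Qd)"
  have F_eq: "F = fps_const D' + (L + Qd)"
    unfolding F_def D'_def L_def Qd_def by (simp only: fsplit) algebra
  have F0: "F $$ 0 = D'" using p0 q0 by (simp add: F_def D'_def fps_nth_power_0)
  have Dp: "D' > 0" using D by (simp add: D'_def)
  have w_eq: "fps_const (1 / D') * F - 1 = w"
  proof -
    have h: "fps_const iD * fps_const D' - 1 = 0" using Dp by (simp add: iD_def)
    have "fps_const (1 / D') * F - 1 = fps_const iD * (fps_const D' + (L + Qd)) - 1"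
      by (simp only: F_eq iD_def)
    also have "\<dots> = (fps_const iD * fps_const D' - 1) + fps_const iD * (L + Qd)" by algebra
    finally show ?thesis by (simp only: h w_def add_0)
  qed
  have w0: "w $$ 0 = 0" using p0 q0 by (simp add: w_def L_def Qd_def fps_nth_power_0)
  have "InvSqrt F = fps_const s * (1 + fps_const (bc 1) * w + fps_const (bc 2) * w^2 + fps_const (bc 3) * w^3 + Tail w)"
    by (simp only: InvSqrt_def F0 w_eq Bn_split[OF w0] s_def)
  also have "\<dots> = fps_const s + Poly3 (\<lambda>i k. wj i k A B D') p q
      + fps_const s * (fps_const (bc 2 * iD^2) * Qd^2 + fps_const (bc 3 * iD^3) * (3 * L^2 * Qd + 3 * L * Qd^2 + Qd^3)
     + Tail w)"
    unfolding Poly3_def wj_def w_def L_def Qd_def Let_def s_def[symmetric] iD_def[symmetric]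
    by (simp only: fsplit if_True if_False simp_thms zero_neq_one one_neq_zero zero_neq_numeral numeral_eq_iff
         numeral_One[symmetric] one_eq_numeral_iff numeral_eq_one_iff semiring_norm) algebra
  finally show ?thesis
    unfolding F_def Rj_def Let_def s_def D'_def iD_def w_def L_def Qd_def by simp
qed

lemma van_mult': "van k f \<Longrightarrow> van l g \<Longrightarrow> m \<le> k + l \<Longrightarrow> van m (f * g)"
  using van_mult van_mono by blast

lemma van_any_mult: "van l g \<Longrightarrow> van l (f * g)"
  using van_mult[OF van_0[of f]] by simp

lemma Tail_van:
  assumes "van k w" "1 \<le> k" shows "van (4 * k) (Tail w)"
  unfolding van_def
proof (intro allI impI)
  fix n assume n: "n < 4 * k"
  have "\<And>i. i \<in> {4..n} \<Longrightarrow> (w ^ i) $$ n = 0"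
  proof -
    fix i assume i: "i \<in> {4..n}"
    have "van (i * k) (w ^ i)" using assms(1) by (rule van_power)
    moreover have "n < i * k" using i n
      by (metis atLeastAtMost_iff less_le_trans mult_le_mono1)
    ultimately show "(w ^ i) $$ n = 0" by (simp add: van_def)
  qed
  then show "Tail w $$ n = 0" by (simp add: Tail_def)
qed

lemma Tail_pert:
  assumes "PV k N w w'" "1 \<le> k" "k \<le> N" shows "van (3 * k + N) (Tail w' - Tail w)"
  unfolding van_def
proof (intro allI impI)
  fix n assume n: "n < 3 * k + N"
  have "\<And>i. i \<in> {4..n} \<Longrightarrow> (w' ^ i) $$ n - (w ^ i) $$ n = 0"
  proof -
    fix i assume i: "i \<in> {4..n}"
    have "PV (i * k) ((i - 1) * k + N) (w ^ i) (w' ^ i)" using assms(1,3) i by (intro PV_power) auto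
    then have "van ((i - 1) * k + N) (w' ^ i - w ^ i)" by (simp add: PV_def)
    moreover have "3 * k \<le> (i - 1) * k" using i by (intro mult_le_mono1) auto
    moreover have "n < (i - 1) * k + N" using n \<open>3 * k \<le> (i - 1) * k\<close> by linarith
    ultimately show "(w' ^ i) $$ n - (w ^ i) $$ n = 0" by (simp add: van_def)
  qed
  then have "(\<Sum>i\<in>{4..n}. bc i * (w' ^ i) $$ n) - (\<Sum>i\<in>{4..n}. bc i * (w ^ i) $$ n) = 0"
    by (simp add: sum_subtractf[symmetric] right_diff_distrib[symmetric])
  then show "(Tail w' - Tail w) $$ n = 0" by (simp add: Tail_def)
qed

lemma R_van:
  assumes p: "van k p" and q: "van k q" and k: "1 \<le> k"
  shows "van (4 * k) (Rj A B D p q)"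
proof -
  define L where "L = fps_const (2*A) * p + fps_const (2*B) * q"
  define Qd where "Qd = p^2 + q^2"
  have L: "van k L" unfolding L_def using p q by (intro van_add van_cmult)
  have Q: "van (2 * k) Qd" unfolding Qd_def using van_power[OF p, of 2] van_power[OF q, of 2]
    by (intro van_add) (simp_all add: mult.commute)
  have L2: "van (2 * k) (L^2)" using van_power[OF L, of 2] by (simp add: mult.commute)
  have "van (4 * k) (Qd * Qd)" using van_mult'[OF Q Q] by simp
  then have t1: "van (4 * k) (fps_const (bc 2 * (1/D)^2) * Qd^2)"
    by (simp add: power2_eq_square van_cmult)
  have t2: "van (4 * k) (fps_const (bc 3 * (1/D)^3) * (3 * L^2 * Qd + 3 * L * Qd^2 + Qd^3))"
  proof (intro van_cmult van_add)
    show "van (4 * k) (3 * L\<^sup>2 * Qd)" by (intro van_mult'[OF van_any_mult[OF L2] Q]) simp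
    show "van (4 * k) (3 * L * Qd\<^sup>2)" using van_mult[OF Q Q]
      by (intro van_mult'[OF van_any_mult[OF L]]) (auto simp: power2_eq_square)
    have "van (2 * k + 2 * k) (Qd * Qd)" by (rule van_mult[OF Q Q])
    then show "van (4 * k) (Qd ^ 3)"
      by (simp add: power3_eq_cube van_any_mult mult.assoc)
  qed
  have w: "van k (fps_const (1/D) * (L + Qd))"
    by (intro van_cmult van_add L) (rule van_mono[OF Q], simp)
  have t3: "van (4 * k) (Tail (fps_const (1/D) * (L + Qd)))" by (rule Tail_van[OF w k])
  show ?thesis unfolding Rj_def Let_def L_def[symmetric] Qd_def[symmetric]
    by (intro van_add t1 t2 t3)
qed

lemma PV_three: "PV 0 N (3 :: real fps) 3" by (simp add: PV_def)

lemma R_pert: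
  assumes p: "PV k N p p'" and q: "PV k N q q'" and k: "1 \<le> k" "k \<le> N"
  shows "van (3 * k + N) (Rj A B D p' q' - Rj A B D p q)"
proof -
  define L where "L = fps_const (2*A) * p + fps_const (2*B) * q"
  define Qd where "Qd = p^2 + q^2"
  define L' where "L' = fps_const (2*A) * p' + fps_const (2*B) * q'"
  define Qd' where "Qd' = p'^2 + q'^2"
  have L: "PV k N L L'" unfolding L_def L'_def using p q by (intro PV_add PV_cmult)
  have Q: "PV (2 * k) (k + N) Qd Qd'" unfolding Qd_def Qd'_def power2_eq_square
    using PV_mult[OF p p] PV_mult[OF q q] by (intro PV_add) (auto simp: mult_2 add.commute)
  have L2: "PV (2 * k) (k + N) (L^2) (L'^2)" unfolding power2_eq_square
    using PV_mult[OF L L] by (simp add: mult_2 add.commute)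
  have Q2: "PV (4 * k) (3 * k + N) (Qd^2) (Qd'^2)" unfolding power2_eq_square
    using PV_mult[OF Q Q] by (rule PV_mono) auto
  have a1: "PV (4 * k) (3 * k + N) (3 * L^2 * Qd) (3 * L'^2 * Qd')"
    using PV_mult[OF PV_mult[OF PV_three[of N] L2] Q] by (rule PV_mono) auto
  have a2: "PV (4 * k) (3 * k + N) (3 * L * Qd^2) (3 * L' * Qd'^2)"
    using PV_mult[OF PV_mult[OF PV_three[of N] L] Q2] by (rule PV_mono) auto
  have a3: "PV (4 * k) (3 * k + N) (Qd^3) (Qd'^3)" unfolding power3_eq_cube
    using PV_mult[OF PV_mult[OF Q Q] Q] by (rule PV_mono) auto
  have t1: "PV (4 * k) (3 * k + N) (fps_const (bc 2 * (1/D)^2) * Qd^2) (fps_const (bc 2 * (1/D)^2) * Qd'^2)"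
    by (intro PV_cmult Q2)
  have t2: "PV (4 * k) (3 * k + N) (fps_const (bc 3 * (1/D)^3) * (3 * L^2 * Qd + 3 * L * Qd^2 + Qd^3))
     (fps_const (bc 3 * (1/D)^3) * (3 * L'^2 * Qd' + 3 * L' * Qd'^2 + Qd'^3))"
    by (intro PV_cmult PV_add a1 a2 a3)
  have w: "PV k N (fps_const (1/D) * (L + Qd)) (fps_const (1/D) * (L' + Qd'))"
    by (intro PV_cmult PV_add L) (rule PV_mono[OF Q], auto)
  have t3: "van (3 * k + N) (Tail (fps_const (1/D) * (L' + Qd')) - Tail (fps_const (1/D) * (L + Qd)))"
    by (rule Tail_pert[OF w k])
  have "van (3 * k + N) ((fps_const (bc 2 * (1/D)^2) * Qd'^2 + fps_const (bc 3 * (1/D)^3) * (3 * L'^2 * Qd' + 3 * L' * Qd'^2 + Qd'^3))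
     - (fps_const (bc 2 * (1/D)^2) * Qd^2 + fps_const (bc 3 * (1/D)^3) * (3 * L^2 * Qd + 3 * L * Qd^2 + Qd^3)))"
    using PV_add[OF t1 t2] by (simp add: PV_def)
  then have "van (3 * k + N) ((fps_const (bc 2 * (1/D)^2) * Qd'^2 + fps_const (bc 3 * (1/D)^3) * (3 * L'^2 * Qd' + 3 * L' * Qd'^2 + Qd'^3))
     - (fps_const (bc 2 * (1/D)^2) * Qd^2 + fps_const (bc 3 * (1/D)^3) * (3 * L^2 * Qd + 3 * L * Qd^2 + Qd^3))
     + (Tail (fps_const (1/D) * (L' + Qd')) - Tail (fps_const (1/D) * (L + Qd))))"
    using t3 by (rule van_add)
  then show ?thesis unfolding Rj_def Let_def L_def[symmetric] Qd_def[symmetric] L'_def[symmetric] Qd'_def[symmetric]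
    by (simp add: algebra_simps)
qed

definition basew :: "real \<Rightarrow> real \<Rightarrow> nat \<Rightarrow> nat \<Rightarrow> real" where
  "basew x0 y0 i k = (if i = 1 \<and> k = 0 then x0 else if i = 0 \<and> k = 1 then y0
     else if (i = 2 \<and> k = 0) \<or> (i = 0 \<and> k = 2) then 1/2 else 0)"

definition om3 :: "(nat \<Rightarrow> real) \<Rightarrow> (nat \<Rightarrow> real) \<Rightarrow> (nat \<Rightarrow> real) \<Rightarrow> real \<Rightarrow> real \<Rightarrow> nat \<Rightarrow> nat \<Rightarrow> real" where
  "om3 m px py x0 y0 i k = basew x0 y0 i k
     + (\<Sum>j\<in>{1,2,3}. m j * wj i k (x0 - px j) (y0 - py j) ((x0 - px j)^2 + (y0 - py j)^2))"

definition Ej0 :: "(nat \<Rightarrow> real) \<Rightarrow> (nat \<Rightarrow> real) \<Rightarrow> (nat \<Rightarrow> real) \<Rightarrow> real \<Rightarrow> real \<Rightarrow> real" where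
  "Ej0 m px py x0 y0 = x0^2 + y0^2 + 2 * (\<Sum>j\<in>{1,2,3}. m j * (1 / sqrt ((x0 - px j)^2 + (y0 - py j)^2)))"

lemma fps_const_sum: "fps_const (\<Sum>j\<in>J. f j) = (\<Sum>j\<in>J. fps_const (f j))"
  by (induction J rule: infinite_finite_induct) (simp_all add: fps_const_add[symmetric])

lemma half_two: "fps_const (1/2 :: real) * 2 = 1"
  by (simp add: numeral_fps_const)

lemma base_part: "fps_const (1/2) * ((fps_const x0 + p)^2 + (fps_const y0 + q)^2)
   = fps_const (1/2) * (fps_const x0 ^ 2 + fps_const y0 ^ 2) + Poly3 (basew x0 y0) p q"
proof -
  have "Poly3 (basew x0 y0) p q = fps_const x0 * p + fps_const y0 * q + fps_const (1/2) * p^2 + fps_const (1/2) * q^2"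
    by (simp add: Poly3_def basew_def)
  then show ?thesis using half_two by (simp only:) algebra
qed

lemma PsiF_decomp:
  assumes p0: "p1 $$ 0 = 0" and q0: "p3 $$ 0 = 0"
    and D: "\<And>j. j \<in> {1,2,3} \<Longrightarrow> (x0 - px j)^2 + (y0 - py j)^2 > 0"
  shows "PsiF m px py x0 y0 p1 p2 p3 p4 = fps_const (Ej0 m px py x0 y0) - (p2^2 + p4^2)
     + 2 * Poly3 (om3 m px py x0 y0) p1 p3
     + 2 * (\<Sum>j\<in>{1,2,3}. fps_const (m j * (1 / sqrt ((x0 - px j)^2 + (y0 - py j)^2)))
            * Rj (x0 - px j) (y0 - py j) ((x0 - px j)^2 + (y0 - py j)^2) p1 p3)"
proof -
  define A where "A j = x0 - px j" for j
  define B where "B j = y0 - py j" for j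
  define Dj where "Dj j = (x0 - px j)^2 + (y0 - py j)^2" for j
  define s where "s j = 1 / sqrt (Dj j)" for j
  define W where "W j = (\<lambda>i k. wj i k (A j) (B j) (Dj j))" for j
  define R where "R j = Rj (A j) (B j) (Dj j) p1 p3" for j
  have inv: "InvSqrt ((fps_const x0 + p1 - fps_const (px j))^2 + (fps_const y0 + p3 - fps_const (py j))^2)
      = fps_const (s j) + Poly3 (W j) p1 p3 + fps_const (s j) * R j" if j: "j \<in> {1,2,3}" for j
  proof -
    have e1: "fps_const x0 + p1 - fps_const (px j) = fps_const (A j) + p1"
      by (simp add: A_def fps_const_sub[symmetric] algebra_simps del: fps_const_sub)
    have e2: "fps_const y0 + p3 - fps_const (py j) = fps_const (B j) + p3"
      by (simp add: B_def fps_const_sub[symmetric] algebra_simps del: fps_const_sub)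
    have Dp: "(A j)^2 + (B j)^2 > 0" using D[OF j] by (simp add: A_def B_def)
    show ?thesis unfolding e1 e2 InvSqrt_decomp[OF p0 q0 Dp]
      by (simp add: s_def W_def R_def Dj_def A_def B_def)
  qed
  have sum_eq: "(\<Sum>j\<in>{1,2,3}. fps_const (m j) * InvSqrt ((fps_const x0 + p1 - fps_const (px j))^2 + (fps_const y0 + p3 - fps_const (py j))^2))
     = (\<Sum>j\<in>{1,2,3}. fps_const (m j) * (fps_const (s j) + Poly3 (W j) p1 p3 + fps_const (s j) * R j))"
    by (rule sum.cong) (simp_all add: inv)
  also have "\<dots> = (\<Sum>j\<in>{1,2,3}. fps_const (m j * s j)) + (\<Sum>j\<in>{1,2,3}. Poly3 (\<lambda>i k. m j * W j i k) p1 p3)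
      + (\<Sum>j\<in>{1,2,3}. fps_const (m j * s j) * R j)"
    by (simp add: sum.distrib distrib_left Poly3_cmult mult.assoc[symmetric])
  also have "(\<Sum>j\<in>{1,2,3}. Poly3 (\<lambda>i k. m j * W j i k) p1 p3) = Poly3 (\<lambda>i k. \<Sum>j\<in>{1,2,3}. m j * W j i k) p1 p3"
    by (rule Poly3_sum[symmetric])
  finally have sum_eq': "(\<Sum>j\<in>{1,2,3}. fps_const (m j) * InvSqrt ((fps_const x0 + p1 - fps_const (px j))^2 + (fps_const y0 + p3 - fps_const (py j))^2))
     = fps_const (\<Sum>j\<in>{1,2,3}. m j * s j) + Poly3 (\<lambda>i k. \<Sum>j\<in>{1,2,3}. m j * W j i k) p1 p3
      + (\<Sum>j\<in>{1,2,3}. fps_const (m j * s j) * R j)"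
    by (simp only: fps_const_sum)
  have om: "Poly3 (om3 m px py x0 y0) p1 p3 = Poly3 (basew x0 y0) p1 p3 + Poly3 (\<lambda>i k. \<Sum>j\<in>{1,2,3}. m j * W j i k) p1 p3"
  proof -
    have "om3 m px py x0 y0 = (\<lambda>i k. basew x0 y0 i k + (\<Sum>j\<in>{1,2,3}. m j * W j i k))"
      by (simp add: om3_def W_def A_def B_def Dj_def fun_eq_iff)
    then show ?thesis by (simp add: Poly3_add)
  qed
  have E: "fps_const (Ej0 m px py x0 y0) = fps_const x0 ^ 2 + fps_const y0 ^ 2 + 2 * fps_const (\<Sum>j\<in>{1,2,3}. m j * s j)"
    unfolding Ej0_def s_def Dj_def by (simp only: fsplit)
  have main: "PsiF m px py x0 y0 p1 p2 p3 p4 = fps_const (Ej0 m px py x0 y0) - (p2^2 + p4^2)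
     + 2 * Poly3 (om3 m px py x0 y0) p1 p3 + 2 * (\<Sum>j\<in>{1,2,3}. fps_const (m j * s j) * R j)"
    unfolding PsiF_def sum_eq' base_part om E using half_two by algebra
  show ?thesis using main by (simp add: s_def R_def A_def B_def Dj_def)
qed

definition rp :: "real \<Rightarrow> real \<Rightarrow> nat \<Rightarrow> real \<Rightarrow> real \<Rightarrow> real" where
  "rp a b k x y = (1 / sqrt ((x-a)^2 + (y-b)^2)) ^ k"

lemma DERIV_rho_y:
  fixes x a b y :: real
  assumes S: "(x-a)^2 + (y-b)^2 > 0"
  shows "((\<lambda>y. (1 / sqrt ((x-a)^2 + (y-b)^2)) ^ k) has_real_derivative
     (- real k * (y - b) * (1 / sqrt ((x-a)^2 + (y-b)^2)) ^ (k+2))) (at y)"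
proof -
  define r where "r = sqrt ((x-a)^2 + (y-b)^2)"
  have r: "r > 0" using S by (simp add: r_def)
  have d1: "((\<lambda>y. (x-a)^2 + (y-b)^2) has_real_derivative 2*(y-b)) (at y)"
    by (auto intro!: derivative_eq_intros)
  have d2: "((\<lambda>y. sqrt ((x-a)^2 + (y-b)^2)) has_real_derivative (inverse (sqrt ((x-a)^2 + (y-b)^2)) / 2 * (2*(y-b)))) (at y)"
    by (rule DERIV_chain2[OF DERIV_real_sqrt[OF S] d1])
  have nz: "sqrt ((x-a)^2 + (y-b)^2) \<noteq> 0" using S by (metis less_irrefl real_sqrt_eq_zero_cancel_iff)
  note d4 = DERIV_power[OF DERIV_inverse_fun[OF d2 nz], of k, unfolded inverse_eq_divide]
  show ?thesis
    apply (rule DERIV_cong[OF d4])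
    unfolding r_def[symmetric] using r
    by (cases k) (simp_all add: field_simps power_add power2_eq_square)
qed

lemma rp_y: "(x-a)^2 + (y-b)^2 > 0 \<Longrightarrow> D = - real k * (y - b) * rp a b (k+2) x y \<Longrightarrow>
    ((\<lambda>y. rp a b k x y) has_real_derivative D) (at y)"
  unfolding rp_def using DERIV_rho_y by blast

lemma rp_x: "(x-a)^2 + (y-b)^2 > 0 \<Longrightarrow> D = - real k * (x - a) * rp a b (k+2) x y \<Longrightarrow>
    ((\<lambda>x. rp a b k x y) has_real_derivative D) (at x)"
proof -
  assume S: "(x-a)^2 + (y-b)^2 > 0" and D: "D = - real k * (x - a) * rp a b (k+2) x y"
  have S': "(y-b)^2 + (x-a)^2 > 0" using S by simp
  have "((\<lambda>x. (1 / sqrt ((y-b)^2 + (x-a)^2)) ^ k) has_real_derivative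
     (- real k * (x - a) * (1 / sqrt ((y-b)^2 + (x-a)^2)) ^ (k+2))) (at x)"
    by (rule DERIV_rho_y[OF S'])
  then show ?thesis unfolding D rp_def by (simp add: add.commute)
qed

lemma deriv_on:
  assumes "open U" "y \<in> U" "\<And>z. z \<in> U \<Longrightarrow> f z = F z" "(F has_real_derivative F') (at y)"
  shows "deriv f y = F'"
proof -
  have "(f has_real_derivative F') (at y)"
    by (rule has_field_derivative_transform_within_open[OF assms(4) assms(1,2)]) (simp add: assms(3))
  then show ?thesis by (rule DERIV_imp_deriv)
qed

lemma open_pos3:
  fixes f :: "nat \<Rightarrow> real \<Rightarrow> real"
  assumes "\<And>j. continuous_on UNIV (f j)"
  shows "open {y. \<forall>j\<in>{1,2,3::nat}. 0 < f j y}"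
proof -
  have "{y. \<forall>j\<in>{1,2,3::nat}. 0 < f j y} = {y. 0 < f 1 y} \<inter> {y. 0 < f 2 y} \<inter> {y. 0 < f 3 y}" by auto
  moreover have "open {y. 0 < f j y}" for j
    using assms[of j] by (intro open_Collect_less) (auto intro: continuous_intros)
  ultimately show ?thesis by auto
qed

context
  fixes m px py :: "nat \<Rightarrow> real"
begin

definition "Y0 x y = Omega m px py x y"
definition "Y1 x y = y - (\<Sum>j\<in>{1,2,3}. m j * ((y - py j) * rp (px j) (py j) 3 x y))"
definition "Y2 x y = 1 - (\<Sum>j\<in>{1,2,3}. m j * (rp (px j) (py j) 3 x y - 3 * (y - py j)^2 * rp (px j) (py j) 5 x y))"
definition "Y3 x y = (\<Sum>j\<in>{1,2,3}. m j * (9 * (y - py j) * rp (px j) (py j) 5 x y - 15 * (y - py j)^3 * rp (px j) (py j) 7 x y))"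

definition "X1 x y = x - (\<Sum>j\<in>{1,2,3}. m j * ((x - px j) * rp (px j) (py j) 3 x y))"
definition "X2 x y = 1 - (\<Sum>j\<in>{1,2,3}. m j * (rp (px j) (py j) 3 x y - 3 * (x - px j)^2 * rp (px j) (py j) 5 x y))"
definition "X3 x y = (\<Sum>j\<in>{1,2,3}. m j * (9 * (x - px j) * rp (px j) (py j) 5 x y - 15 * (x - px j)^3 * rp (px j) (py j) 7 x y))"
definition "G11 x y = (\<Sum>j\<in>{1,2,3}. m j * (3 * (y - py j) * (x - px j) * rp (px j) (py j) 5 x y))"
definition "G12 x y = (\<Sum>j\<in>{1,2,3}. m j * (3 * (y - py j) * (rp (px j) (py j) 5 x y - 5 * (x - px j)^2 * rp (px j) (py j) 7 x y)))"
definition "G21 x y = (\<Sum>j\<in>{1,2,3}. m j * (3 * (x - px j) * rp (px j) (py j) 5 x y - 15 * (y - py j)^2 * (x - px j) * rp (px j) (py j) 7 x y))"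

definition "good x y \<longleftrightarrow> (\<forall>j\<in>{1,2,3}. 0 < (x - px j)^2 + (y - py j)^2)"

lemma DERIV_msum:
  "(\<And>j. j \<in> {1,2,3} \<Longrightarrow> ((\<lambda>y. f j y) has_real_derivative f' j) (at y)) \<Longrightarrow>
   ((\<lambda>y. \<Sum>j\<in>{1,2,3::nat}. m j * f j y) has_real_derivative (\<Sum>j\<in>{1,2,3}. m j * f' j)) (at y)"
  by (rule DERIV_sum) (rule DERIV_cmult, auto)

lemma Y0_alt: "Y0 x y = (x^2 + y^2) / 2 + (\<Sum>j\<in>{1,2,3}. m j * rp (px j) (py j) 1 x y)"
  by (simp add: Y0_def Omega_def rp_def)

end

lemma T0y: "(x-a)^2 + (y-b)^2 > 0 \<Longrightarrow> ((\<lambda>y. rp a b 1 x y) has_real_derivative (- ((y - b) * rp a b 3 x y))) (at y)"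
  by (rule rp_y) (simp_all add: eval_nat_numeral algebra_simps)
lemma T1y: "(x-a)^2 + (y-b)^2 > 0 \<Longrightarrow> ((\<lambda>y. (y - b) * rp a b 3 x y) has_real_derivative (rp a b 3 x y - 3 * (y-b)^2 * rp a b 5 x y)) (at y)"
  by (rule DERIV_cong[OF DERIV_mult'[OF DERIV_diff[OF DERIV_ident DERIV_const] rp_y[OF _ refl]]])
     (simp_all add: algebra_simps power2_eq_square)
lemma T2y: "(x-a)^2 + (y-b)^2 > 0 \<Longrightarrow> ((\<lambda>y. rp a b 3 x y - 3 * (y-b)^2 * rp a b 5 x y) has_real_derivative
    (- (9 * (y - b) * rp a b 5 x y - 15 * (y-b)^3 * rp a b 7 x y))) (at y)"
  by (rule DERIV_cong[OF DERIV_diff[OF rp_y[OF _ refl] DERIV_mult'[OF DERIV_cmult[OF DERIV_power[OF DERIV_diff[OF DERIV_ident DERIV_const]]] rp_y[OF _ refl]]]])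
     (simp_all add: algebra_simps power2_eq_square power3_eq_cube)

lemma T0x: "(x-a)^2 + (y-b)^2 > 0 \<Longrightarrow> ((\<lambda>x. rp a b 1 x y) has_real_derivative (- ((x - a) * rp a b 3 x y))) (at x)"
  by (rule rp_x) (simp_all add: eval_nat_numeral algebra_simps)
lemma T1x: "(x-a)^2 + (y-b)^2 > 0 \<Longrightarrow> ((\<lambda>x. (x - a) * rp a b 3 x y) has_real_derivative (rp a b 3 x y - 3 * (x-a)^2 * rp a b 5 x y)) (at x)"
  by (rule DERIV_cong[OF DERIV_mult'[OF DERIV_diff[OF DERIV_ident DERIV_const] rp_x[OF _ refl]]])
     (simp_all add: algebra_simps power2_eq_square)
lemma T2x: "(x-a)^2 + (y-b)^2 > 0 \<Longrightarrow> ((\<lambda>x. rp a b 3 x y - 3 * (x-a)^2 * rp a b 5 x y) has_real_derivative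
    (- (9 * (x - a) * rp a b 5 x y - 15 * (x-a)^3 * rp a b 7 x y))) (at x)"
  by (rule DERIV_cong[OF DERIV_diff[OF rp_x[OF _ refl] DERIV_mult'[OF DERIV_cmult[OF DERIV_power[OF DERIV_diff[OF DERIV_ident DERIV_const]]] rp_x[OF _ refl]]]])
     (simp_all add: algebra_simps power2_eq_square power3_eq_cube)
lemma T3x: "(x-a)^2 + (y-b)^2 > 0 \<Longrightarrow> ((\<lambda>x. (y - b) * rp a b 3 x y) has_real_derivative (- (3 * (y - b) * (x - a) * rp a b 5 x y))) (at x)"
  by (rule DERIV_cong[OF DERIV_cmult[OF rp_x[OF _ refl]]]) (simp_all add: algebra_simps)
lemma T4x: "(x-a)^2 + (y-b)^2 > 0 \<Longrightarrow> ((\<lambda>x. 3 * (y - b) * (x - a) * rp a b 5 x y) has_real_derivative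
    (3 * (y - b) * (rp a b 5 x y - 5 * (x-a)^2 * rp a b 7 x y))) (at x)"
  by (rule DERIV_cong[OF DERIV_mult'[OF DERIV_cmult[OF DERIV_diff[OF DERIV_ident DERIV_const]] rp_x[OF _ refl]]])
     (simp_all add: algebra_simps power2_eq_square)
lemma T5x: "(x-a)^2 + (y-b)^2 > 0 \<Longrightarrow> ((\<lambda>x. rp a b 3 x y - 3 * (y-b)^2 * rp a b 5 x y) has_real_derivative
    (- (3 * (x - a) * rp a b 5 x y - 15 * (y-b)^2 * (x - a) * rp a b 7 x y))) (at x)"
  by (rule DERIV_cong[OF DERIV_diff[OF rp_x[OF _ refl] DERIV_cmult[OF rp_x[OF _ refl]]]])
     (simp_all add: algebra_simps)

context
  fixes m px py :: "nat \<Rightarrow> real"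
begin

lemma neg_sum_m: "0 - (\<Sum>j\<in>A. (mm j::real) * - f j) = (\<Sum>j\<in>A. mm j * f j)"
  by (simp add: sum_negf)

lemma good_T: "good px py x y \<Longrightarrow> j \<in> {1,2,3} \<Longrightarrow> (x - px j)^2 + (y - py j)^2 > 0"
  by (auto simp: good_def)

lemma dquad_y: "((\<lambda>y. (x^2 + y^2) / 2) has_real_derivative y) (at y)"
  by (auto intro!: derivative_eq_intros)
lemma dquad_x: "((\<lambda>x. (x^2 + y^2) / 2) has_real_derivative x) (at x)"
  by (auto intro!: derivative_eq_intros)

lemma DY0: "good px py x y \<Longrightarrow> ((\<lambda>y. Y0 m px py x y) has_real_derivative Y1 m px py x y) (at y)"
proof -
  assume g: "good px py x y"
  have e: "(\<lambda>y. Y0 m px py x y) = (\<lambda>y. (x^2 + y^2) / 2 + (\<Sum>j\<in>{1,2,3}. m j * rp (px j) (py j) 1 x y))"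
    by (simp add: Y0_alt)
  have ds: "((\<lambda>y. \<Sum>j\<in>{1,2,3}. m j * rp (px j) (py j) 1 x y) has_real_derivative
      (\<Sum>j\<in>{1,2,3}. m j * (- ((y - py j) * rp (px j) (py j) 3 x y)))) (at y)"
    by (rule DERIV_msum) (rule T0y, rule good_T[OF g])
  show ?thesis unfolding e
    by (rule DERIV_cong[OF DERIV_add[OF dquad_y ds]]) (simp add: Y1_def sum_negf)
qed

lemma DX0: "good px py x y \<Longrightarrow> ((\<lambda>x. Y0 m px py x y) has_real_derivative X1 m px py x y) (at x)"
proof -
  assume g: "good px py x y"
  have e: "(\<lambda>x. Y0 m px py x y) = (\<lambda>x. (x^2 + y^2) / 2 + (\<Sum>j\<in>{1,2,3}. m j * rp (px j) (py j) 1 x y))"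
    by (simp add: Y0_alt)
  have ds: "((\<lambda>x. \<Sum>j\<in>{1,2,3}. m j * rp (px j) (py j) 1 x y) has_real_derivative
      (\<Sum>j\<in>{1,2,3}. m j * (- ((x - px j) * rp (px j) (py j) 3 x y)))) (at x)"
    by (rule DERIV_msum) (rule T0x, rule good_T[OF g])
  show ?thesis unfolding e
    by (rule DERIV_cong[OF DERIV_add[OF dquad_x ds]]) (simp add: X1_def sum_negf)
qed

lemma DY1: assumes g: "good px py x y" shows "((\<lambda>y. Y1 m px py x y) has_real_derivative Y2 m px py x y) (at y)"
  unfolding Y1_def Y2_def
  by (rule DERIV_diff[OF DERIV_ident DERIV_msum[OF T1y[OF good_T[OF g]]]])

lemma DY2: assumes g: "good px py x y" shows "((\<lambda>y. Y2 m px py x y) has_real_derivative Y3 m px py x y) (at y)"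
  unfolding Y2_def
  apply (rule DERIV_cong[OF DERIV_diff[OF DERIV_const DERIV_msum[OF T2y[OF good_T[OF g]]]]]) apply simp unfolding Y3_def by (rule neg_sum_m)

lemma DX1: assumes g: "good px py x y" shows "((\<lambda>x. X1 m px py x y) has_real_derivative X2 m px py x y) (at x)"
  unfolding X1_def X2_def
  by (rule DERIV_diff[OF DERIV_ident DERIV_msum[OF T1x[OF good_T[OF g]]]])

lemma DX2: assumes g: "good px py x y" shows "((\<lambda>x. X2 m px py x y) has_real_derivative X3 m px py x y) (at x)"
  unfolding X2_def
  apply (rule DERIV_cong[OF DERIV_diff[OF DERIV_const DERIV_msum[OF T2x[OF good_T[OF g]]]]]) apply simp unfolding X3_def by (rule neg_sum_m)

lemma DG1: assumes g: "good px py x y" shows "((\<lambda>x. Y1 m px py x y) has_real_derivative G11 m px py x y) (at x)"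
  unfolding Y1_def
  apply (rule DERIV_cong[OF DERIV_diff[OF DERIV_const DERIV_msum[OF T3x[OF good_T[OF g]]]]]) apply simp unfolding G11_def by (rule neg_sum_m)

lemma DG11: assumes g: "good px py x y" shows "((\<lambda>x. G11 m px py x y) has_real_derivative G12 m px py x y) (at x)"
  unfolding G11_def G12_def
  by (rule DERIV_msum[OF T4x[OF good_T[OF g]]])

lemma DG2: assumes g: "good px py x y" shows "((\<lambda>x. Y2 m px py x y) has_real_derivative G21 m px py x y) (at x)"
  unfolding Y2_def
  apply (rule DERIV_cong[OF DERIV_diff[OF DERIV_const DERIV_msum[OF T5x[OF good_T[OF g]]]]]) apply simp unfolding G21_def by (rule neg_sum_m)

lemma open_good_y: "open {y. good px py x y}"
  unfolding good_def by (rule open_pos3) (intro continuous_intros)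
lemma open_good_x: "open {x. good px py x y}"
  unfolding good_def by (rule open_pos3) (intro continuous_intros)

lemma Y0_eta: "Y0 m px py x = Omega m px py x" by (rule ext) (simp add: Y0_def)

lemma inner1: "good px py x z \<Longrightarrow> deriv (\<lambda>y. Omega m px py x y) z = Y1 m px py x z"
  by (rule deriv_on[OF open_good_y, where F = "\<lambda>y. Y0 m px py x y"]) (auto simp: Y0_def intro: DY0[unfolded Y0_eta])
lemma inner2: "good px py x z \<Longrightarrow> deriv (deriv (\<lambda>y. Omega m px py x y)) z = Y2 m px py x z"
  by (rule deriv_on[OF open_good_y, where F = "\<lambda>y. Y1 m px py x y"]) (auto simp: inner1 intro: DY1)
lemma inner3: "good px py x z \<Longrightarrow> deriv (deriv (deriv (\<lambda>y. Omega m px py x y))) z = Y3 m px py x z"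
  by (rule deriv_on[OF open_good_y, where F = "\<lambda>y. Y2 m px py x y"]) (auto simp: inner2 intro: DY2)

lemma pd_vals:
  assumes g: "good px py x0 y0"
  defines "Om \<equiv> Omega m px py"
  shows "pd 1 0 Om x0 y0 = X1 m px py x0 y0" "pd 2 0 Om x0 y0 = X2 m px py x0 y0"
    "pd 3 0 Om x0 y0 = X3 m px py x0 y0"
    "pd 0 1 Om x0 y0 = Y1 m px py x0 y0" "pd 1 1 Om x0 y0 = G11 m px py x0 y0"
    "pd 2 1 Om x0 y0 = G12 m px py x0 y0"
    "pd 0 2 Om x0 y0 = Y2 m px py x0 y0" "pd 1 2 Om x0 y0 = G21 m px py x0 y0"
    "pd 0 3 Om x0 y0 = Y3 m px py x0 y0"
proof -
  let ?V = "{x. good px py x y0}"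
  have V: "open ?V" by (rule open_good_x)
  have H0: "\<And>x. x \<in> ?V \<Longrightarrow> Om x y0 = Y0 m px py x y0" by (simp add: Y0_def Om_def)
  have H1: "\<And>x. x \<in> ?V \<Longrightarrow> deriv (\<lambda>y. Om x y) y0 = Y1 m px py x y0" by (simp add: Om_def inner1)
  have H2: "\<And>x. x \<in> ?V \<Longrightarrow> deriv (deriv (\<lambda>y. Om x y)) y0 = Y2 m px py x y0" by (simp add: Om_def inner2)
  have H3: "\<And>x. x \<in> ?V \<Longrightarrow> deriv (deriv (deriv (\<lambda>y. Om x y))) y0 = Y3 m px py x y0" by (simp add: Om_def inner3)
  have A1: "\<And>x. x \<in> ?V \<Longrightarrow> deriv (\<lambda>x. Om x y0) x = X1 m px py x y0"
    by (rule deriv_on[OF V, where F = "\<lambda>x. Y0 m px py x y0"]) (auto simp: H0 intro: DX0)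
  have A2: "\<And>x. x \<in> ?V \<Longrightarrow> deriv (deriv (\<lambda>x. Om x y0)) x = X2 m px py x y0"
    by (rule deriv_on[OF V, where F = "\<lambda>x. X1 m px py x y0"]) (auto simp: A1 intro: DX1)
  have A3: "\<And>x. x \<in> ?V \<Longrightarrow> deriv (deriv (deriv (\<lambda>x. Om x y0))) x = X3 m px py x y0"
    by (rule deriv_on[OF V, where F = "\<lambda>x. X2 m px py x y0"]) (auto simp: A2 intro: DX2)
  have B1: "\<And>x. x \<in> ?V \<Longrightarrow> deriv (\<lambda>x. deriv (\<lambda>y. Om x y) y0) x = G11 m px py x y0"
    by (rule deriv_on[OF V, where F = "\<lambda>x. Y1 m px py x y0"]) (auto simp: H1 intro: DG1)
  have B2: "\<And>x. x \<in> ?V \<Longrightarrow> deriv (deriv (\<lambda>x. deriv (\<lambda>y. Om x y) y0)) x = G12 m px py x y0"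
    by (rule deriv_on[OF V, where F = "\<lambda>x. G11 m px py x y0"]) (auto simp: B1 intro: DG11)
  have C1: "\<And>x. x \<in> ?V \<Longrightarrow> deriv (\<lambda>x. deriv (deriv (\<lambda>y. Om x y)) y0) x = G21 m px py x y0"
    by (rule deriv_on[OF V, where F = "\<lambda>x. Y2 m px py x y0"]) (auto simp: H2 intro: DG2)
  have x0V: "x0 \<in> ?V" using g by simp
  show "pd 1 0 Om x0 y0 = X1 m px py x0 y0" using A1[OF x0V] by (simp add: pd_def)
  show "pd 2 0 Om x0 y0 = X2 m px py x0 y0" using A2[OF x0V] by (simp add: pd_def eval_nat_numeral)
  show "pd 3 0 Om x0 y0 = X3 m px py x0 y0" using A3[OF x0V] by (simp add: pd_def eval_nat_numeral)
  show "pd 0 1 Om x0 y0 = Y1 m px py x0 y0" using H1[OF x0V] by (simp add: pd_def)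
  show "pd 1 1 Om x0 y0 = G11 m px py x0 y0" using B1[OF x0V] by (simp add: pd_def)
  show "pd 2 1 Om x0 y0 = G12 m px py x0 y0" using B2[OF x0V] by (simp add: pd_def eval_nat_numeral)
  show "pd 0 2 Om x0 y0 = Y2 m px py x0 y0" using H2[OF x0V] by (simp add: pd_def eval_nat_numeral)
  show "pd 1 2 Om x0 y0 = G21 m px py x0 y0" using C1[OF x0V] by (simp add: pd_def eval_nat_numeral)
  show "pd 0 3 Om x0 y0 = Y3 m px py x0 y0" using H3[OF x0V] by (simp add: pd_def eval_nat_numeral)
qed

end

lemma inv_sq: "1 / ((A::real)^2 + B^2) = (1 / sqrt (A^2 + B^2))^2"
  by (simp add: power_divide)

lemma bc_num1: "bc (numeral num.One) = -1/2" using bc_vals(2) by simp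

lemma wj_s0:
  fixes A B :: real
  defines "s \<equiv> 1 / sqrt (A^2 + B^2)"
  shows "wj 1 0 A B (A^2+B^2) = - A * s^3"
  unfolding wj_def Let_def inv_sq s_def[symmetric]
  by (simp only: bc_vals bc_num1 if_True if_False simp_thms zero_neq_one one_neq_zero zero_neq_numeral numeral_eq_iff
         one_eq_numeral_iff numeral_eq_one_iff semiring_norm) algebra

lemma wj_s1:
  fixes A B :: real
  defines "s \<equiv> 1 / sqrt (A^2 + B^2)"
  shows "wj 0 1 A B (A^2+B^2) = - B * s^3"
  unfolding wj_def Let_def inv_sq s_def[symmetric]
  by (simp only: bc_vals bc_num1 if_True if_False simp_thms zero_neq_one one_neq_zero zero_neq_numeral numeral_eq_iff
         one_eq_numeral_iff numeral_eq_one_iff semiring_norm) algebra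

lemma wj_s2:
  fixes A B :: real
  defines "s \<equiv> 1 / sqrt (A^2 + B^2)"
  shows "wj 2 0 A B (A^2+B^2) = (3 * A^2 * s^5 - s^3) / 2"
  unfolding wj_def Let_def inv_sq s_def[symmetric]
  by (simp only: bc_vals bc_num1 if_True if_False simp_thms zero_neq_one one_neq_zero zero_neq_numeral numeral_eq_iff
         one_eq_numeral_iff numeral_eq_one_iff semiring_norm) algebra

lemma wj_s3:
  fixes A B :: real
  defines "s \<equiv> 1 / sqrt (A^2 + B^2)"
  shows "wj 1 1 A B (A^2+B^2) = 3 * A * B * s^5"
  unfolding wj_def Let_def inv_sq s_def[symmetric]
  by (simp only: bc_vals bc_num1 if_True if_False simp_thms zero_neq_one one_neq_zero zero_neq_numeral numeral_eq_iff
         one_eq_numeral_iff numeral_eq_one_iff semiring_norm) algebra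

lemma wj_s4:
  fixes A B :: real
  defines "s \<equiv> 1 / sqrt (A^2 + B^2)"
  shows "wj 0 2 A B (A^2+B^2) = (3 * B^2 * s^5 - s^3) / 2"
  unfolding wj_def Let_def inv_sq s_def[symmetric]
  by (simp only: bc_vals bc_num1 if_True if_False simp_thms zero_neq_one one_neq_zero zero_neq_numeral numeral_eq_iff
         one_eq_numeral_iff numeral_eq_one_iff semiring_norm) algebra

lemma wj_s5:
  fixes A B :: real
  defines "s \<equiv> 1 / sqrt (A^2 + B^2)"
  shows "wj 3 0 A B (A^2+B^2) = (9 * A * s^5 - 15 * A^3 * s^7) / 6"
  unfolding wj_def Let_def inv_sq s_def[symmetric]
  by (simp only: bc_vals bc_num1 if_True if_False simp_thms zero_neq_one one_neq_zero zero_neq_numeral numeral_eq_iff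
         one_eq_numeral_iff numeral_eq_one_iff semiring_norm) algebra

lemma wj_s6:
  fixes A B :: real
  defines "s \<equiv> 1 / sqrt (A^2 + B^2)"
  shows "wj 2 1 A B (A^2+B^2) = (3 * B * s^5 - 15 * A^2 * B * s^7) / 2"
  unfolding wj_def Let_def inv_sq s_def[symmetric]
  by (simp only: bc_vals bc_num1 if_True if_False simp_thms zero_neq_one one_neq_zero zero_neq_numeral numeral_eq_iff
         one_eq_numeral_iff numeral_eq_one_iff semiring_norm) algebra

lemma wj_s7:
  fixes A B :: real
  defines "s \<equiv> 1 / sqrt (A^2 + B^2)"
  shows "wj 1 2 A B (A^2+B^2) = (3 * A * s^5 - 15 * A * B^2 * s^7) / 2"
  unfolding wj_def Let_def inv_sq s_def[symmetric]
  by (simp only: bc_vals bc_num1 if_True if_False simp_thms zero_neq_one one_neq_zero zero_neq_numeral numeral_eq_iff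
         one_eq_numeral_iff numeral_eq_one_iff semiring_norm) algebra

lemma wj_s8:
  fixes A B :: real
  defines "s \<equiv> 1 / sqrt (A^2 + B^2)"
  shows "wj 0 3 A B (A^2+B^2) = (9 * B * s^5 - 15 * B^3 * s^7) / 6"
  unfolding wj_def Let_def inv_sq s_def[symmetric]
  by (simp only: bc_vals bc_num1 if_True if_False simp_thms zero_neq_one one_neq_zero zero_neq_numeral numeral_eq_iff
         one_eq_numeral_iff numeral_eq_one_iff semiring_norm) algebra

lemmas wj_s = wj_s0 wj_s1 wj_s2 wj_s3 wj_s4 wj_s5 wj_s6 wj_s7 wj_s8
lemmas wj_s' = wj_s[unfolded One_nat_def]

lemma pt10: "wj 1 0 a b (a^2+b^2) = - (a * (1 / sqrt (a^2 + b^2))^3)"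
proof -
  define S where "S = 1 / sqrt (a^2 + b^2)"
  show ?thesis unfolding wj_s0 S_def[symmetric] by (simp add: field_simps)
qed

lemma pt20: "2 * wj 2 0 a b (a^2+b^2) = - ((1 / sqrt (a^2 + b^2))^3 - 3 * a^2 * (1 / sqrt (a^2 + b^2))^5)"
proof -
  define S where "S = 1 / sqrt (a^2 + b^2)"
  show ?thesis unfolding wj_s2 S_def[symmetric] by (simp add: field_simps)
qed

lemma pt30: "6 * wj 3 0 a b (a^2+b^2) = 9 * a * (1 / sqrt (a^2 + b^2))^5 - 15 * a^3 * (1 / sqrt (a^2 + b^2))^7"
proof -
  define S where "S = 1 / sqrt (a^2 + b^2)"
  show ?thesis unfolding wj_s5 S_def[symmetric] by (simp add: field_simps)
qed

lemma pt01: "wj 0 1 a b (a^2+b^2) = - (b * (1 / sqrt (a^2 + b^2))^3)"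
proof -
  define S where "S = 1 / sqrt (a^2 + b^2)"
  show ?thesis unfolding wj_s1 S_def[symmetric] by (simp add: field_simps)
qed

lemma pt11: "wj 1 1 a b (a^2+b^2) = 3 * b * a * (1 / sqrt (a^2 + b^2))^5"
proof -
  define S where "S = 1 / sqrt (a^2 + b^2)"
  show ?thesis unfolding wj_s3 S_def[symmetric] by (simp add: field_simps)
qed

lemma pt21: "2 * wj 2 1 a b (a^2+b^2) = 3 * b * ((1 / sqrt (a^2 + b^2))^5 - 5 * a^2 * (1 / sqrt (a^2 + b^2))^7)"
proof -
  define S where "S = 1 / sqrt (a^2 + b^2)"
  show ?thesis unfolding wj_s6 S_def[symmetric] by (simp add: field_simps)
qed

lemma pt02: "2 * wj 0 2 a b (a^2+b^2) = - ((1 / sqrt (a^2 + b^2))^3 - 3 * b^2 * (1 / sqrt (a^2 + b^2))^5)"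
proof -
  define S where "S = 1 / sqrt (a^2 + b^2)"
  show ?thesis unfolding wj_s4 S_def[symmetric] by (simp add: field_simps)
qed

lemma pt12: "2 * wj 1 2 a b (a^2+b^2) = 3 * a * (1 / sqrt (a^2 + b^2))^5 - 15 * b^2 * a * (1 / sqrt (a^2 + b^2))^7"
proof -
  define S where "S = 1 / sqrt (a^2 + b^2)"
  show ?thesis unfolding wj_s7 S_def[symmetric] by (simp add: field_simps)
qed

lemma pt03: "6 * wj 0 3 a b (a^2+b^2) = 9 * b * (1 / sqrt (a^2 + b^2))^5 - 15 * b^3 * (1 / sqrt (a^2 + b^2))^7"
proof -
  define S where "S = 1 / sqrt (a^2 + b^2)"
  show ?thesis unfolding wj_s8 S_def[symmetric] by (simp add: field_simps)
qed

lemmas pts1 = pt10[unfolded One_nat_def] pt01[unfolded One_nat_def] pt11[unfolded One_nat_def]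
  pt21[unfolded One_nat_def] pt12[unfolded One_nat_def]

lemma M_form: "a = c * b \<Longrightarrow> (\<And>j. j \<in> J \<Longrightarrow> c * G j = F j) \<Longrightarrow>
   a + (\<Sum>j\<in>J. (m j :: real) * F j) = c * (b + (\<Sum>j\<in>J. m j * G j))"
proof -
  assume a: "a = c * b" and h: "\<And>j. j \<in> J \<Longrightarrow> c * G j = F j"
  have "(\<Sum>j\<in>J. m j * F j) = (\<Sum>j\<in>J. c * (m j * G j))"
    by (rule sum.cong) (simp_all add: h[symmetric] mult.left_commute)
  also have "\<dots> = c * (\<Sum>j\<in>J. m j * G j)" by (simp add: sum_distrib_left)
  finally show ?thesis using a by (simp add: distrib_left)
qed

lemma M0_form: "0 = c * b \<Longrightarrow> (\<And>j. j \<in> J \<Longrightarrow> c * G j = F j) \<Longrightarrow>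
   (\<Sum>j\<in>J. (m j :: real) * F j) = c * (b + (\<Sum>j\<in>J. m j * G j))"
  using M_form[of 0 c b J G F m] by simp

lemma minus_form: "a - (\<Sum>j\<in>J. (m j :: real) * f j) = a + (\<Sum>j\<in>J. m j * (- f j))"
  by (simp add: sum_negf)
lemma zero_form: "(\<Sum>j\<in>J. (m j :: real) * f j) = 0 + (\<Sum>j\<in>J. m j * f j)"
  by simp

lemma pd_om3:
  fixes m px py :: "nat \<Rightarrow> real"
  assumes g: "good px py x0 y0"
  defines "Om \<equiv> Omega m px py" and "w \<equiv> om3 m px py x0 y0"
  shows "pd 1 0 Om x0 y0 = 1 * w 1 0" "pd 2 0 Om x0 y0 = 2 * w 2 0"
    "pd 3 0 Om x0 y0 = 6 * w 3 0"
    "pd 0 1 Om x0 y0 = 1 * w 0 1" "pd 1 1 Om x0 y0 = 1 * w 1 1"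
    "pd 2 1 Om x0 y0 = 2 * w 2 1"
    "pd 0 2 Om x0 y0 = 2 * w 0 2" "pd 1 2 Om x0 y0 = 2 * w 1 2"
    "pd 0 3 Om x0 y0 = 6 * w 0 3"
proof -
  note pv = pd_vals[OF g, of m, folded Om_def]
  have wv: "w i k = basew x0 y0 i k + (\<Sum>j\<in>{1,2,3}. m j * wj i k (x0 - px j) (y0 - py j) ((x0 - px j)^2 + (y0 - py j)^2))" for i k
    by (simp add: w_def om3_def)
  note rpv = rp_def[of _ _ _ x0 y0]
  show "pd 1 0 Om x0 y0 = 1 * w 1 0"
    unfolding pv X1_def wv minus_form by (rule M_form) (simp_all add: basew_def rpv pt10 pts1)
  show "pd 2 0 Om x0 y0 = 2 * w 2 0"
    unfolding pv X2_def wv minus_form by (rule M_form) (simp_all add: basew_def rpv pt20 pts1)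
  show "pd 3 0 Om x0 y0 = 6 * w 3 0"
    unfolding pv X3_def wv by (rule M0_form) (simp_all add: basew_def rpv pt30 pts1)
  show "pd 0 1 Om x0 y0 = 1 * w 0 1"
    unfolding pv Y1_def wv minus_form by (rule M_form) (simp_all add: basew_def rpv pt01 pts1)
  show "pd 1 1 Om x0 y0 = 1 * w 1 1"
    unfolding pv G11_def wv by (rule M0_form) (simp_all add: basew_def rpv pt11 pts1)
  show "pd 2 1 Om x0 y0 = 2 * w 2 1"
    unfolding pv G12_def wv by (rule M0_form) (simp_all add: basew_def rpv pt21 pts1)
  show "pd 0 2 Om x0 y0 = 2 * w 0 2"
    unfolding pv Y2_def wv minus_form by (rule M_form) (simp_all add: basew_def rpv pt02 pts1)
  show "pd 1 2 Om x0 y0 = 2 * w 1 2"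
    unfolding pv G21_def wv by (rule M0_form) (simp_all add: basew_def rpv pt12 pts1)
  show "pd 0 3 Om x0 y0 = 6 * w 0 3"
    unfolding pv Y3_def wv by (rule M0_form) (simp_all add: basew_def rpv pt03 pts1)
qed

definition Zs :: "(nat \<Rightarrow> nat \<Rightarrow> real^4) \<Rightarrow> (nat \<Rightarrow> real) \<Rightarrow> 4 \<Rightarrow> real fps" where
  "Zs K c k = K_of_h K c $ k"

lemma Kh_nth: "Zs K c k $$ n = (\<Sum>i\<le>n. \<Sum>j\<le>n. K i j $ k * (Abs_fps c ^ i * fps_X ^ (3*j)) $$ n)"
  by (simp add: Zs_def K_of_h_def fps_sum_nth mult.assoc)

lemma van_x: fixes c :: "nat \<Rightarrow> real" shows "c 0 = 0 \<Longrightarrow> c 1 = 0 \<Longrightarrow> van 2 (Abs_fps c)"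
  by (auto simp: van_def less_2_cases_iff)

lemma van_term: "van 2 x \<Longrightarrow> van (2*i + 3*j) (x ^ i * fps_X ^ (3*j))"
proof -
  assume x: "van 2 x"
  have "van (i * 2) (x ^ i)" using van_power[OF x] .
  moreover have "van (3*j) (fps_X ^ (3*j))" by (rule van_X_power)
  ultimately show ?thesis using van_mult by (fastforce simp: mult.commute)
qed

lemma term_low:
  fixes c :: "nat \<Rightarrow> real"
  assumes c: "c 0 = 0" "c 1 = 0" and n: "n < 4"
  shows "(Abs_fps c ^ i * fps_X^(3*j)) $$ n = (if i = 0 \<and> j = 0 then (if n = 0 then 1 else 0)
     else if i = 1 \<and> j = 0 then c n else if i = 0 \<and> j = 1 then (if n = 3 then 1 else 0) else 0)"
proof -
  have x: "van 2 (Abs_fps c)" using c by (rule van_x)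
  consider "i = 0 \<and> j = 0" | "i = 1 \<and> j = 0" | "i = 0 \<and> j = 1" | "2*i + 3*j \<ge> 4" by linarith
  then show ?thesis
  proof cases
    case 4
    then have h1: "\<not> (i = 0 \<and> j = 0)" and h2: "\<not> (i = 1 \<and> j = 0)" and h3: "\<not> (i = 0 \<and> j = 1)" by auto
    have h4: "(Abs_fps c ^ i * fps_X^(3*j)) $$ n = 0"
      using van_term[OF x, of i j] 4 n by (simp add: van_def)
    show ?thesis by (simp only: h4 if_not_P[OF h1] if_not_P[OF h2] if_not_P[OF h3])
  qed (auto simp: fps_X_power_nth)
qed

lemma Zs_low:
  fixes c :: "nat \<Rightarrow> real"
  assumes c: "c 0 = 0" "c 1 = 0" and n: "n < 4"
  shows "Zs K c k $$ n = K 1 0 $ k * c n + K 0 1 $ k * (if n = 3 then 1 else 0) + K 0 0 $ k * (if n = 0 then 1 else 0)"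
proof -
  have "Zs K c k $$ n = (\<Sum>i\<le>n. \<Sum>j\<le>n. K i j $ k * (if i = 0 \<and> j = 0 then (if n = 0 then 1 else 0)
     else if i = 1 \<and> j = 0 then c n else if i = 0 \<and> j = 1 then (if n = 3 then 1 else 0) else 0))"
    unfolding Kh_nth by (simp add: term_low[OF c n])
  also have "\<dots> = K 1 0 $ k * c n + K 0 1 $ k * (if n = 3 then 1 else 0) + K 0 0 $ k * (if n = 0 then 1 else 0)"
  proof -
    have "n = 0 \<or> n = 1 \<or> n = 2 \<or> n = 3" using n by linarith
    then show ?thesis using c by (elim disjE) (simp_all add: numeral_eq_Suc atMost_Suc)
  qed
  finally show ?thesis .
qed


lemma dsum_delta: "(\<Sum>i\<le>n. \<Sum>j\<le>(n::nat). (if i = a \<and> j = b then g i j else (0::real))) = (if a \<le> n \<and> b \<le> n then g a b else 0)"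
proof -
  have "(\<Sum>j\<le>n. (if i = a \<and> j = b then g i j else 0)) = (if i = a \<and> b \<le> n then g i b else 0)" for i
    by (cases "i = a") (simp_all add: sum.delta')
  then show ?thesis by (cases "b \<le> n") (simp_all add: sum.delta')
qed

lemma Zs_pert:
  fixes c c' :: "nat \<Rightarrow> real"
  assumes c: "c 0 = 0" "c 1 = 0" "c' 0 = 0" "c' 1 = 0" and agree: "\<And>i. i < N \<Longrightarrow> c' i = c i"
    and N: "2 \<le> N" and n: "n < N + 2"
  shows "Zs K c' k $$ n - Zs K c k $$ n = K 1 0 $ k * (c' n - c n)"
proof -
  define x where "x = Abs_fps c"
  define x' where "x' = Abs_fps c'"
  have vx: "van 2 x" unfolding x_def using c by (intro van_x)
  have vx': "van 2 x'" unfolding x'_def using c by (intro van_x)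
  have vd: "van N (x' - x)" unfolding van_def x_def x'_def using agree by simp
  have PVx: "PV 2 N x x'" using vx vx' vd by (simp add: PV_def)
  have td: "(x'^i * fps_X^(3*j)) $$ n - (x^i * fps_X^(3*j)) $$ n = (if i = 1 \<and> j = 0 then c' n - c n else 0)" for i j
  proof (cases "i = 0")
    case True then show ?thesis by simp
  next
    case False
    show ?thesis
    proof (cases "i = 1 \<and> j = 0")
      case True then show ?thesis by (simp add: x_def x'_def)
    next
      case F2: False
      have "PV (i * 2) ((i - 1) * 2 + N) (x ^ i) (x' ^ i)" using PVx False N by (intro PV_power) auto
      then have "van ((i - 1) * 2 + N) (x' ^ i - x ^ i)" by (simp add: PV_def)
      then have "van ((i - 1) * 2 + N + 3 * j) ((x' ^ i - x ^ i) * fps_X^(3*j))"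
        using van_X_power[of "3*j"] van_mult by blast
      moreover have "n < (i - 1) * 2 + N + 3 * j" using False F2 n by (cases i) auto
      ultimately have "((x' ^ i - x ^ i) * fps_X^(3*j)) $$ n = 0" by (simp add: van_def)
      moreover have "(x' ^ i - x ^ i) * fps_X^(3*j) = x'^i * fps_X^(3*j) - x^i * fps_X^(3*j)"
        by (simp add: algebra_simps)
      ultimately show ?thesis using F2 by auto
    qed
  qed
  have "Zs K c' k $$ n - Zs K c k $$ n = (\<Sum>i\<le>n. \<Sum>j\<le>n. K i j $ k * ((x'^i * fps_X^(3*j)) $$ n - (x^i * fps_X^(3*j)) $$ n))"
    unfolding Kh_nth x_def x'_def by (simp add: sum_subtractf[symmetric] right_diff_distrib)
  also have "\<dots> = (\<Sum>i\<le>n. \<Sum>j\<le>n. (if i = 1 \<and> j = 0 then K i j $ k * (c' n - c n) else 0))"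
    unfolding td by (intro sum.cong refl) auto
  also have "\<dots> = (if 1 \<le> n \<and> 0 \<le> n then K 1 0 $ k * (c' n - c n) else 0)"
    by (rule dsum_delta)
  also have "\<dots> = K 1 0 $ k * (c' n - c n)" using c by (cases n) auto
  finally show ?thesis .
qed

context
  fixes K :: "nat \<Rightarrow> nat \<Rightarrow> real^4"
  assumes K0: "K 0 0 = 0" and K10: "K 1 0 = vector [1, 0, 0, 0]" and K01: "K 0 1 = vector [0, 1, 0, 0]"
begin

lemma Kv: "K 1 0 $ 1 = 1" "K 1 0 $ 2 = 0" "K 1 0 $ 3 = 0" "K 1 0 $ 4 = 0"
  "K 0 1 $ 1 = 0" "K 0 1 $ 2 = 1" "K 0 1 $ 3 = 0" "K 0 1 $ 4 = 0" "K 0 0 $ k = 0"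
  by (simp_all only: K10 K01 K0) (simp_all add: vector_def)

lemmas Kv' = Kv[unfolded One_nat_def]

lemma LTZ1: "c 0 = 0 \<Longrightarrow> c 1 = 0 \<Longrightarrow> LT 2 (c 2) (Zs K c 1)"
  unfolding LT_iff van_def by (auto simp: Zs_low Kv Kv' less_2_cases_iff)

lemma LTZ2: "c 0 = 0 \<Longrightarrow> c 1 = 0 \<Longrightarrow> LT 3 1 (Zs K c 2)"
  unfolding LT_iff van_def by (auto simp: Zs_low Kv Kv')

lemma LTZ3: "c 0 = 0 \<Longrightarrow> c 1 = 0 \<Longrightarrow> LT 3 0 (Zs K c 3)"
  unfolding LT_iff van_def by (auto simp: Zs_low Kv Kv')

lemma LTZ4: "c 0 = 0 \<Longrightarrow> c 1 = 0 \<Longrightarrow> LT 3 0 (Zs K c 4)"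
  unfolding LT_iff van_def by (auto simp: Zs_low Kv Kv')

lemma Z0: "c 0 = 0 \<Longrightarrow> c 1 = 0 \<Longrightarrow> Zs K c k $$ 0 = 0"
  by (simp add: Zs_low Kv Kv')

lemma LTZ1p:
  assumes c: "c 0 = 0" "c 1 = 0" "c' 0 = 0" "c' 1 = 0" and agree: "\<And>i. i < N \<Longrightarrow> c' i = c i" and N: "2 \<le> N"
  shows "LT N (c' N - c N) (Zs K c' 1 - Zs K c 1)"
  unfolding LT_iff van_def using Zs_pert[OF c agree N, of _ K 1] agree by (auto simp: Kv Kv')

lemma LTZkp:
  assumes c: "c 0 = 0" "c 1 = 0" "c' 0 = 0" "c' 1 = 0" and agree: "\<And>i. i < N \<Longrightarrow> c' i = c i" and N: "2 \<le> N"
    and k: "k \<noteq> 1"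
  shows "LT (Suc N) 0 (Zs K c' k - Zs K c k)"
proof -
  have "K 1 0 $ k = 0" using k exhaust_4[of k] by (auto simp: Kv Kv')
  then show ?thesis unfolding LT_zero_iff van_def using Zs_pert[OF c agree N, of _ K k] by auto
qed

end

definition Cub :: "(nat \<Rightarrow> nat \<Rightarrow> real) \<Rightarrow> real fps \<Rightarrow> real fps \<Rightarrow> real fps" where
  "Cub w p q = fps_const (w 3 0) * p^3 + fps_const (w 2 1) * (p^2 * q) + fps_const (w 1 2) * (p * q^2) + fps_const (w 0 3) * q^3"

definition cubr :: "(nat \<Rightarrow> nat \<Rightarrow> real) \<Rightarrow> real \<Rightarrow> real \<Rightarrow> real" where
  "cubr w u v = w 3 0 * u^3 + w 2 1 * (u^2 * v) + w 1 2 * (u * v^2) + w 0 3 * v^3"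

lemma Poly3_split:
  assumes "w 1 0 = 0" "w 0 1 = 0"
  shows "Poly3 w p q = fps_const (w 2 0) * p^2 + fps_const (w 1 1) * (p * q) + fps_const (w 0 2) * q^2 + Cub w p q"
  using assms by (simp add: Poly3_def Cub_def)

lemma Quad_eq:
  fixes w :: "nat \<Rightarrow> nat \<Rightarrow> real" and a b d :: real
  assumes "w 2 0 = a/2" "w 1 1 = b" "w 0 2 = d/2" "a * d = b^2" "d \<noteq> 0"
  shows "fps_const (w 2 0) * p^2 + fps_const (w 1 1) * (p * q) + fps_const (w 0 2) * q^2
       = fps_const (1/(2*d)) * (fps_const b * p + fps_const d * q)^2"
proof -
  have e1: "w 2 0 = 1/(2*d) * b^2" using assms by (simp add: field_simps power2_eq_square)
  have e2: "w 1 1 = 1/(2*d) * (2 * b * d)" using assms by (simp add: field_simps)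
  have e3: "w 0 2 = 1/(2*d) * d^2" using assms by (simp add: field_simps power2_eq_square)
  show ?thesis unfolding e1 e2 e3 by (simp only: fsplit) algebra
qed

lemma LT_idx: "LT k a f \<Longrightarrow> k = k' \<Longrightarrow> a = a' \<Longrightarrow> LT k' a' f" by simp

lemma LT_Cub:
  assumes p: "LT 2 u p" and q: "LT 2 v q"
  shows "LT 6 (cubr w u v) (Cub w p q)"
proof -
  have t1: "LT 6 (w 3 0 * u^3) (fps_const (w 3 0) * p^3)"
    by (rule LT_idx[OF LT_cmult[OF LT_power[OF p, of 3]]]) simp_all
  have t2: "LT 6 (w 2 1 * (u^2 * v)) (fps_const (w 2 1) * (p^2 * q))"
    by (rule LT_idx[OF LT_cmult[OF LT_mult[OF LT_power[OF p, of 2] q]]]) simp_all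
  have t3: "LT 6 (w 1 2 * (u * v^2)) (fps_const (w 1 2) * (p * q^2))"
    by (rule LT_idx[OF LT_cmult[OF LT_mult[OF p LT_power[OF q, of 2]]]]) simp_all
  have t4: "LT 6 (w 0 3 * v^3) (fps_const (w 0 3) * q^3)"
    by (rule LT_idx[OF LT_cmult[OF LT_power[OF q, of 3]]]) simp_all
  show ?thesis unfolding Cub_def cubr_def by (intro LT_add t1 t2 t3 t4)
qed

lemma LT_Cub_pert:
  assumes p: "LT 2 u p" and p': "LT 2 u p'" and q: "LT 2 v q" and q': "LT 2 v q'"
    and dp: "LT N e (p' - p)" and dq: "LT N f (q' - q)"
  shows "LT (N + 4) (w 3 0 * (e * (3 * u^2)) + w 2 1 * (e * (2 * u) * v + u^2 * f)
      + w 1 2 * (e * v^2 + u * (f * (2 * v))) + w 0 3 * (f * (3 * v^2))) (Cub w p' q' - Cub w p q)"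
proof -
  have id: "Cub w p' q' - Cub w p q =
      fps_const (w 3 0) * ((p' - p) * (p'^2 + p' * p + p^2))
    + fps_const (w 2 1) * ((p' - p) * (p' + p) * q' + p^2 * (q' - q))
    + fps_const (w 1 2) * ((p' - p) * q'^2 + p * ((q' - q) * (q' + q)))
    + fps_const (w 0 3) * ((q' - q) * (q'^2 + q' * q + q^2))"
    unfolding Cub_def by algebra
  have s1: "LT 4 (3 * u^2) (p'^2 + p' * p + p^2)"
  proof -
    have "LT 4 (u^2 + u * u + u^2) (p'^2 + p' * p + p^2)"
      by (intro LT_add LT_idx[OF LT_power[OF p', of 2]] LT_idx[OF LT_power[OF p, of 2]] LT_idx[OF LT_mult[OF p' p]]) simp_all
    then show ?thesis by (rule LT_idx) (simp_all add: power2_eq_square)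
  qed
  have s4: "LT 4 (3 * v^2) (q'^2 + q' * q + q^2)"
  proof -
    have "LT 4 (v^2 + v * v + v^2) (q'^2 + q' * q + q^2)"
      by (intro LT_add LT_idx[OF LT_power[OF q', of 2]] LT_idx[OF LT_power[OF q, of 2]] LT_idx[OF LT_mult[OF q' q]]) simp_all
    then show ?thesis by (rule LT_idx) (simp_all add: power2_eq_square)
  qed
  have pp: "LT 2 (2 * u) (p' + p)" using LT_add[OF p' p] by (rule LT_idx) simp_all
  have qq: "LT 2 (2 * v) (q' + q)" using LT_add[OF q' q] by (rule LT_idx) simp_all
  have a1: "LT (N+4) (e * (3 * u^2)) ((p' - p) * (p'^2 + p' * p + p^2))" by (rule LT_mult[OF dp s1])
  have a2: "LT (N+4) (e * (2 * u) * v + u^2 * f) ((p' - p) * (p' + p) * q' + p^2 * (q' - q))"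
    by (intro LT_add LT_idx[OF LT_mult[OF LT_mult[OF dp pp] q']] LT_idx[OF LT_mult[OF LT_power[OF p, of 2] dq]]) simp_all
  have a3: "LT (N+4) (e * v^2 + u * (f * (2 * v))) ((p' - p) * q'^2 + p * ((q' - q) * (q' + q)))"
    by (intro LT_add LT_idx[OF LT_mult[OF dp LT_power[OF q', of 2]]] LT_idx[OF LT_mult[OF p LT_mult[OF dq qq]]]) simp_all
  have a4: "LT (N+4) (f * (3 * v^2)) ((q' - q) * (q'^2 + q' * q + q^2))" by (rule LT_mult[OF dq s4])
  show ?thesis unfolding id by (intro LT_add LT_cmult a1 a2 a3 a4)
qed

lemma LT_two: "LT k a f \<Longrightarrow> LT k (2 * a) (2 * f)"
  using LT_cmult[of k a f 2] by (simp add: numeral_fps_const)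

lemma LT_of_van: "van m f \<Longrightarrow> Suc k \<le> m \<Longrightarrow> LT k 0 f"
  by (simp add: LT_zero_iff van_mono)

lemma Rsum_van:
  assumes "\<And>j. j \<in> {1,2,3::nat} \<Longrightarrow> van M (R j)"
  shows "van M (\<Sum>j\<in>{1,2,3}. fps_const (g j) * R j)"
  by (intro van_sum van_cmult assms)

theorem Psi_LT6:
  fixes P1 P2 P3 P4 :: "real fps" and a b d c2 x0 y0 :: real and m px py :: "nat \<Rightarrow> real"
  defines "w \<equiv> om3 m px py x0 y0"
  assumes D: "\<And>j. j \<in> {1,2,3} \<Longrightarrow> (x0 - px j)^2 + (y0 - py j)^2 > 0"
    and w: "w 1 0 = 0" "w 0 1 = 0" "w 2 0 = a/2" "w 1 1 = b" "w 0 2 = d/2" "a * d = b^2" "d \<noteq> 0"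
    and L1: "LT 2 (d * c2) P1" and L3: "LT 2 (- b * c2) P3" and L2: "LT 3 d P2" and L4: "LT 3 (- b) P4"
    and Ll: "LT 3 (2 * d) (fps_const b * P1 + fps_const d * P3)"
  shows "LT 6 (- (d^2 + b^2) + 2 * (2 * d + cubr w (d * c2) (- b * c2)))
     (PsiF m px py x0 y0 P1 P2 P3 P4 - fps_const (Ej0 m px py x0 y0))"
proof -
  have v1: "van 2 P1" using LT_van[OF L1] .
  have v3: "van 2 P3" using LT_van[OF L3] .
  have p0: "P1 $$ 0 = 0" "P3 $$ 0 = 0" using v1 v3 by (simp_all add: van_def)
  define RS where "RS = (\<Sum>j\<in>{1,2,3}. fps_const (m j * (1 / sqrt ((x0 - px j)^2 + (y0 - py j)^2)))
            * Rj (x0 - px j) (y0 - py j) ((x0 - px j)^2 + (y0 - py j)^2) P1 P3)"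
  define l where "l = fps_const b * P1 + fps_const d * P3"
  have dec: "PsiF m px py x0 y0 P1 P2 P3 P4 - fps_const (Ej0 m px py x0 y0)
     = - (P2^2 + P4^2) + 2 * (fps_const (1/(2*d)) * l^2 + Cub w P1 P3) + 2 * RS"
  proof -
    have dec0: "PsiF m px py x0 y0 P1 P2 P3 P4 = fps_const (Ej0 m px py x0 y0) - (P2^2 + P4^2)
       + 2 * Poly3 w P1 P3 + 2 * RS"
      unfolding RS_def w_def by (rule PsiF_decomp[OF p0 D])
    show ?thesis unfolding dec0 Poly3_split[OF w(1,2)] Quad_eq[OF w(3-7)] l_def
      by (simp add: algebra_simps)
  qed
  have RSv: "van 8 RS" unfolding RS_def
    by (rule Rsum_van) (rule R_van[OF v1 v3, of _ _ _, simplified])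
  have t1: "LT 6 (d^2 + b^2) (P2^2 + P4^2)"
    by (intro LT_add LT_idx[OF LT_power[OF L2, of 2]] LT_idx[OF LT_power[OF L4, of 2]]) simp_all
  have t2: "LT 6 (1/(2*d) * (2*d)^2) (fps_const (1/(2*d)) * l^2)"
    unfolding l_def by (intro LT_cmult LT_idx[OF LT_power[OF Ll, of 2]]) simp_all
  have t3: "LT 6 (cubr w (d * c2) (- b * c2)) (Cub w P1 P3)" by (rule LT_Cub[OF L1 L3])
  have t4: "LT 6 0 RS" using RSv by (rule LT_of_van) simp
  have "LT 6 (- (d^2 + b^2) + 2 * (1/(2*d) * (2*d)^2 + cubr w (d * c2) (- b * c2)) + 2 * 0)
     (- (P2^2 + P4^2) + 2 * (fps_const (1/(2*d)) * l^2 + Cub w P1 P3) + 2 * RS)"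
    by (intro LT_add LT_uminus LT_two t1 t2 t3 t4)
  then show ?thesis unfolding dec by (rule LT_idx) (use w(7) in \<open>simp_all add: power2_eq_square\<close>)
qed

theorem Psi_pert:
  fixes P1 P2 P3 P4 Q1 Q2 Q3 Q4 :: "real fps" and a b d c2 e f x0 y0 :: real and m px py :: "nat \<Rightarrow> real"
  defines "w \<equiv> om3 m px py x0 y0"
  assumes D: "\<And>j. j \<in> {1,2,3} \<Longrightarrow> (x0 - px j)^2 + (y0 - py j)^2 > 0"
    and w: "w 1 0 = 0" "w 0 1 = 0" "w 2 0 = a/2" "w 1 1 = b" "w 0 2 = d/2" "a * d = b^2" "d \<noteq> 0"
    and L1: "LT 2 (d * c2) P1" and L3: "LT 2 (- b * c2) P3" and L2: "LT 3 d P2" and L4: "LT 3 (- b) P4"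
    and Ll: "LT 3 (2 * d) (fps_const b * P1 + fps_const d * P3)"
    and M1: "LT 2 (d * c2) Q1" and M3: "LT 2 (- b * c2) Q3" and M2: "LT 3 d Q2" and M4: "LT 3 (- b) Q4"
    and Ml: "LT 3 (2 * d) (fps_const b * Q1 + fps_const d * Q3)"
    and d1: "LT N e (Q1 - P1)" and d3: "LT N f (Q3 - P3)" and d2: "LT (Suc N) 0 (Q2 - P2)"
    and d4: "LT (Suc N) 0 (Q4 - P4)"
    and dl: "LT (Suc N) 0 ((fps_const b * Q1 + fps_const d * Q3) - (fps_const b * P1 + fps_const d * P3))"
    and N: "3 \<le> N"
  shows "LT (N + 4) (2 * (w 3 0 * (e * (3 * (d * c2)^2)) + w 2 1 * (e * (2 * (d * c2)) * (- b * c2) + (d * c2)^2 * f)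
      + w 1 2 * (e * (- b * c2)^2 + (d * c2) * (f * (2 * (- b * c2)))) + w 0 3 * (f * (3 * (- b * c2)^2))))
     (PsiF m px py x0 y0 Q1 Q2 Q3 Q4 - PsiF m px py x0 y0 P1 P2 P3 P4)"
proof -
  have v1: "van 2 P1" using LT_van[OF L1] .
  have v3: "van 2 P3" using LT_van[OF L3] .
  have u1: "van 2 Q1" using LT_van[OF M1] .
  have u3: "van 2 Q3" using LT_van[OF M3] .
  have p0: "P1 $$ 0 = 0" "P3 $$ 0 = 0" using v1 v3 by (simp_all add: van_def)
  have q0: "Q1 $$ 0 = 0" "Q3 $$ 0 = 0" using u1 u3 by (simp_all add: van_def)
  define A where "A j = x0 - px j" for j
  define B where "B j = y0 - py j" for j
  define DD where "DD j = (x0 - px j)^2 + (y0 - py j)^2" for j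
  define g where "g j = m j * (1 / sqrt ((x0 - px j)^2 + (y0 - py j)^2))" for j
  define RS where "RS = (\<Sum>j\<in>{1,2,3}. fps_const (g j) * Rj (A j) (B j) (DD j) P1 P3)"
  define RS' where "RS' = (\<Sum>j\<in>{1,2,3}. fps_const (g j) * Rj (A j) (B j) (DD j) Q1 Q3)"
  define l where "l = fps_const b * P1 + fps_const d * P3"
  define l' where "l' = fps_const b * Q1 + fps_const d * Q3"
  have dec: "PsiF m px py x0 y0 P1 P2 P3 P4 = fps_const (Ej0 m px py x0 y0) - (P2^2 + P4^2)
       + 2 * (fps_const (1/(2*d)) * l^2 + Cub w P1 P3) + 2 * RS"
  proof -
    have dec0: "PsiF m px py x0 y0 P1 P2 P3 P4 = fps_const (Ej0 m px py x0 y0) - (P2^2 + P4^2)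
       + 2 * Poly3 w P1 P3 + 2 * RS"
      unfolding RS_def w_def g_def A_def B_def DD_def by (rule PsiF_decomp[OF p0 D])
    show ?thesis unfolding dec0 Poly3_split[OF w(1,2)] Quad_eq[OF w(3-7)] l_def
      by (simp add: algebra_simps)
  qed
  have dec': "PsiF m px py x0 y0 Q1 Q2 Q3 Q4 = fps_const (Ej0 m px py x0 y0) - (Q2^2 + Q4^2)
       + 2 * (fps_const (1/(2*d)) * l'^2 + Cub w Q1 Q3) + 2 * RS'"
  proof -
    have dec0: "PsiF m px py x0 y0 Q1 Q2 Q3 Q4 = fps_const (Ej0 m px py x0 y0) - (Q2^2 + Q4^2)
       + 2 * Poly3 w Q1 Q3 + 2 * RS'"
      unfolding RS'_def w_def g_def A_def B_def DD_def by (rule PsiF_decomp[OF q0 D])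
    show ?thesis unfolding dec0 Poly3_split[OF w(1,2)] Quad_eq[OF w(3-7)] l'_def
      by (simp add: algebra_simps)
  qed
  have diff: "PsiF m px py x0 y0 Q1 Q2 Q3 Q4 - PsiF m px py x0 y0 P1 P2 P3 P4
     = - ((Q2 - P2) * (Q2 + P2) + (Q4 - P4) * (Q4 + P4))
       + 2 * (fps_const (1/(2*d)) * ((l' - l) * (l' + l)) + (Cub w Q1 Q3 - Cub w P1 P3)) + 2 * (RS' - RS)"
    unfolding dec dec' by (simp add: algebra_simps power2_eq_square)
  have PVp: "PV 2 N P1 Q1" using v1 u1 LT_van[OF d1] by (simp add: PV_def)
  have PVq: "PV 2 N P3 Q3" using v3 u3 LT_van[OF d3] by (simp add: PV_def)
  have Rd: "van (3 * 2 + N) (Rj (A j) (B j) (DD j) Q1 Q3 - Rj (A j) (B j) (DD j) P1 P3)" for j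
    by (rule R_pert[OF PVp PVq]) (use N in auto)
  have RSd: "RS' - RS = (\<Sum>j\<in>{1,2,3}. fps_const (g j) * (Rj (A j) (B j) (DD j) Q1 Q3 - Rj (A j) (B j) (DD j) P1 P3))"
    unfolding RS_def RS'_def by (simp add: sum_subtractf[symmetric] algebra_simps)
  have t4: "LT (N + 4) 0 (RS' - RS)" unfolding RSd
    by (rule LT_of_van[OF Rsum_van[OF Rd]]) simp
  have P2s: "LT 3 (2 * d) (Q2 + P2)" using LT_add[OF M2 L2] by (rule LT_idx) simp_all
  have P4s: "LT 3 (2 * - b) (Q4 + P4)" using LT_add[OF M4 L4] by (rule LT_idx) simp_all
  have ls: "LT 3 (2 * (2 * d)) (l' + l)" unfolding l_def l'_def using LT_add[OF Ml Ll] by (rule LT_idx) simp_all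
  have t1: "LT (N + 4) 0 ((Q2 - P2) * (Q2 + P2) + (Q4 - P4) * (Q4 + P4))"
    by (intro LT_idx[OF LT_add[OF LT_mult[OF d2 P2s] LT_mult[OF d4 P4s]]]) simp_all
  have dl': "LT (Suc N) 0 (l' - l)" using dl unfolding l_def l'_def .
  have t2: "LT (N + 4) 0 (fps_const (1/(2*d)) * ((l' - l) * (l' + l)))"
    using LT_cmult[OF LT_mult[OF dl' ls], of "1/(2*d)"] by (rule LT_idx) simp_all
  note t3 = LT_Cub_pert[OF L1 M1 L3 M3 d1 d3, of w]
  have "LT (N + 4) (- 0 + 2 * (0 + (w 3 0 * (e * (3 * (d * c2)^2)) + w 2 1 * (e * (2 * (d * c2)) * (- b * c2) + (d * c2)^2 * f)
      + w 1 2 * (e * (- b * c2)^2 + (d * c2) * (f * (2 * (- b * c2)))) + w 0 3 * (f * (3 * (- b * c2)^2)))) + 2 * 0)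
     (- ((Q2 - P2) * (Q2 + P2) + (Q4 - P4) * (Q4 + P4))
       + 2 * (fps_const (1/(2*d)) * ((l' - l) * (l' + l)) + (Cub w Q1 Q3 - Cub w P1 P3)) + 2 * (RS' - RS))"
    by (intro LT_add LT_uminus LT_two t1 t2 t3 t4)
  then show ?thesis unfolding diff by (rule LT_idx) simp_all
qed

lemma construct:
  fixes Psi :: "(nat \<Rightarrow> real) \<Rightarrow> real fps" and E0 c2 L :: real
  assumes L: "L \<noteq> 0"
    and H6: "\<And>cs. cs 0 = 0 \<Longrightarrow> cs 1 = 0 \<Longrightarrow> cs 2 = c2 \<Longrightarrow> van 7 (Psi cs - fps_const E0)"
    and HP: "\<And>cs cs' N. cs 0 = 0 \<Longrightarrow> cs 1 = 0 \<Longrightarrow> cs 2 = c2 \<Longrightarrow> cs' 0 = 0 \<Longrightarrow> cs' 1 = 0 \<Longrightarrow>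
       (\<And>i. i < N \<Longrightarrow> cs' i = cs i) \<Longrightarrow> 3 \<le> N \<Longrightarrow> LT (N + 4) (L * (cs' N - cs N)) (Psi cs' - Psi cs)"
  shows "\<exists>c. c 0 = 0 \<and> c 1 = 0 \<and> Psi c - fps_const E0 = 0"
proof -
  define s0 :: "nat \<Rightarrow> real" where "s0 = (\<lambda>i. if i = 2 then c2 else 0)"
  define S where "S = rec_nat s0 (\<lambda>n cs. cs(n + 3 := cs (n + 3) - Psi cs $$ (n + 7) / L))"
  have S0: "S 0 = s0" by (simp add: S_def)
  have SS: "S (Suc n) = (S n)(n + 3 := S n (n + 3) - Psi (S n) $$ (n + 7) / L)" for n
    by (simp add: S_def)
  have low: "S n 0 = 0 \<and> S n 1 = 0 \<and> S n 2 = c2" for n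
    by (induction n) (simp_all add: S0 SS s0_def)
  have stp: "i < n + 3 \<Longrightarrow> S (Suc n) i = S n i" for n i by (simp add: SS)
  have stab: "n \<le> m \<Longrightarrow> i < n + 3 \<Longrightarrow> S m i = S n i" for n m i
  proof (induction m rule: dec_induct)
    case base then show ?case by simp
  next
    case (step m) then show ?case using stp[of i m] by simp
  qed
  define c where "c i = S i i" for i
  have cagree: "i < n + 3 \<Longrightarrow> c i = S n i" for i n
  proof (cases "i \<le> n")
    case True
    assume "i < n + 3"
    then show ?thesis using stab[of i n i] True by (simp add: c_def)
  next
    case False
    assume "i < n + 3"
    then show ?thesis using stab[of n i i] False by (simp add: c_def)
  qed
  have c0: "c 0 = 0" "c 1 = 0" "c 2 = c2" using low by (simp_all add: c_def)
  have zero_at: "Psi (S (Suc n)) $$ (n + 7) = 0" for n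
  proof -
    have "LT (n + 3 + 4) (L * (S (Suc n) (n + 3) - S n (n + 3))) (Psi (S (Suc n)) - Psi (S n))"
      by (rule HP) (use low in \<open>auto simp: SS\<close>)
    then have "(Psi (S (Suc n)) - Psi (S n)) $$ (n + 3 + 4) = L * (S (Suc n) (n + 3) - S n (n + 3))"
      by (rule LT_nth)
    then have "(Psi (S (Suc n)) - Psi (S n)) $$ (n + 7) = L * (S (Suc n) (n + 3) - S n (n + 3))"
      by (simp add: add.assoc)
    then show ?thesis using L by (simp add: SS)
  qed
  have "Psi c - fps_const E0 = 0"
  proof (rule fps_ext)
    fix k
    show "(Psi c - fps_const E0) $$ k = 0 $$ k"
    proof (cases "k < 7")
      case True then show ?thesis using H6[OF c0] by (simp add: van_def)
    next
      case False
      define n where "n = k - 7"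
      have k: "k = n + 7" using False by (simp add: n_def)
      have "LT (n + 4 + 4) (L * (c (n + 4) - S (Suc n) (n + 4))) (Psi c - Psi (S (Suc n)))"
        by (rule HP) (use low c0 cagree in \<open>auto\<close>)
      then have "van (n + 8) (Psi c - Psi (S (Suc n)))"
        using LT_van by (metis add.assoc numeral_plus_numeral semiring_norm(2) semiring_norm(6) semiring_norm(7)
             LT_van add_Suc_right numeral_Bit0 numeral_One one_plus_numeral)
      then have "Psi c $$ k = Psi (S (Suc n)) $$ k" using k by (simp add: van_def)
      then show ?thesis using zero_at[of n] k by simp
    qed
  qed
  then show ?thesis using c0 by blast
qed

lemma Pc_expand: "Pc C Z i = fps_const (C$i$1) * Z$1 + fps_const (C$i$2) * Z$2 + fps_const (C$i$3) * Z$3 + fps_const (C$i$4) * Z$4"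
  by (simp add: Pc_def sum_4)

lemma LT_lin4: "LT k a1 z1 \<Longrightarrow> LT k a2 z2 \<Longrightarrow> LT k a3 z3 \<Longrightarrow> LT k a4 z4 \<Longrightarrow>
  LT k (c1*a1 + c2*a2 + c3*a3 + c4*a4) (fps_const c1 * z1 + fps_const c2 * z2 + fps_const c3 * z3 + fps_const c4 * z4)"
  by (intro LT_add LT_cmult)

lemma LT_lin4_0: "c1 = 0 \<Longrightarrow> LT k a2 z2 \<Longrightarrow> LT k a3 z3 \<Longrightarrow> LT k a4 z4 \<Longrightarrow>
  LT k (c2*a2 + c3*a3 + c4*a4) (fps_const c1 * z1 + fps_const c2 * z2 + fps_const c3 * z3 + fps_const c4 * z4)"
  using LT_add[OF LT_add[OF LT_cmult[of k a2 z2 c2] LT_cmult[of k a3 z3 c3]] LT_cmult[of k a4 z4 c4]]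
  by (simp add: add.assoc)

lemma lin4_diff: fixes y1 y2 y3 y4 z1 z2 z3 z4 :: "real fps" shows "(fps_const c1 * y1 + fps_const c2 * y2 + fps_const c3 * y3 + fps_const c4 * y4)
   - (fps_const c1 * z1 + fps_const c2 * z2 + fps_const c3 * z3 + fps_const c4 * z4)
   = fps_const c1 * (y1 - z1) + fps_const c2 * (y2 - z2) + fps_const c3 * (y3 - z3) + fps_const c4 * (y4 - z4)"
  by (simp add: algebra_simps)

lemma lin4_comb: fixes z1 z2 z3 z4 :: "real fps" shows "fps_const b * (fps_const c1 * z1 + fps_const c2 * z2 + fps_const c3 * z3 + fps_const c4 * z4)
   + fps_const d * (fps_const e1 * z1 + fps_const e2 * z2 + fps_const e3 * z3 + fps_const e4 * z4)
   = fps_const (b*c1 + d*e1) * z1 + fps_const (b*c2 + d*e2) * z2 + fps_const (b*c3 + d*e3) * z3 + fps_const (b*c4 + d*e4) * z4"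
  by (simp only: fsplit) algebra

theorem lemma2:
  fixes m px py :: "nat \<Rightarrow> real" and x0 y0 :: real
    and K :: "nat \<Rightarrow> nat \<Rightarrow> real^4" and r1 r2 :: "nat \<Rightarrow> nat \<Rightarrow> real"
  defines "Om \<equiv> Omega m px py"
  assumes masses: "m 1 + m 2 + m 3 = 1" "0 < m 3" "m 3 \<le> m 2" "m 2 \<le> m 1"
    and not_primary: "\<And>j. j \<in> {1,2,3} \<Longrightarrow> (x0, y0) \<noteq> (px j, py j)"
    and crit: "pd 1 0 Om x0 y0 = 0" "pd 0 1 Om x0 y0 = 0"
      "pd 2 0 Om x0 y0 * pd 0 2 Om x0 y0 = (pd 1 1 Om x0 y0)\<^sup>2"
    and Oyy: "pd 0 2 Om x0 y0 \<noteq> 0"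
    and trace: "pd 2 0 Om x0 y0 + pd 0 2 Om x0 y0 > 4"
    and K0: "K 0 0 = 0" and K10: "K 1 0 = vector [1, 0, 0, 0]" and K01: "K 0 1 = vector [0, 1, 0, 0]"
    and r_low: "r1 0 0 = 0" "r1 1 0 = 0" "r1 0 1 = 1" "\<And>i j. i + j < 2 \<Longrightarrow> r2 i j = 0"
    and invariance: "\<And>i j. DKr K r1 r2 i j = comp2 (Fvf Om x0 y0) K i j"
    and nondeg: "pd 3 0 Om x0 y0 * (pd 0 2 Om x0 y0)^3
        - 3 * pd 2 1 Om x0 y0 * (pd 0 2 Om x0 y0)^2 * pd 1 1 Om x0 y0
        + 3 * pd 1 2 Om x0 y0 * pd 0 2 Om x0 y0 * (pd 1 1 Om x0 y0)^2
        - pd 0 3 Om x0 y0 * (pd 1 1 Om x0 y0)^3 \<noteq> 0"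
  shows "\<exists>c :: nat \<Rightarrow> real. c 0 = 0 \<and> c 1 = 0 \<and>
    comp1 (Ecal Om x0 y0) (K_of_h K c) - fps_const (Ecal Om x0 y0 0) = 0"
proof -
  have Om_eq: "Om = Omega m px py" by (simp add: Om_def)
  have D: "\<And>j. j \<in> {1,2,3} \<Longrightarrow> (x0 - px j)^2 + (y0 - py j)^2 > 0"
  proof -
    fix j :: nat assume j: "j \<in> {1,2,3}"
    then have "x0 - px j \<noteq> 0 \<or> y0 - py j \<noteq> 0" using not_primary[OF j] by auto
    then show "(x0 - px j)^2 + (y0 - py j)^2 > 0" by (simp add: sum_power2_gt_zero_iff)
  qed
  have g: "good px py x0 y0" using D by (simp add: good_def)
  define w where "w = om3 m px py x0 y0"
  note pw = pd_om3[OF g, of m, folded Om_eq w_def]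
  define a where "a = pd 2 0 Om x0 y0"
  define b where "b = pd 1 1 Om x0 y0"
  define d where "d = pd 0 2 Om x0 y0"
  have w10: "w 1 0 = 0" using crit(1) pw(1) by simp
  have w01: "w 0 1 = 0" using crit(2) pw(4) by simp
  have w20: "w 2 0 = a/2" using pw(2) by (simp add: a_def)
  have w11: "w 1 1 = b" using pw(5) by (simp add: b_def)
  have w02: "w 0 2 = d/2" using pw(7) by (simp add: d_def)
  have ad: "a * d = b^2" using crit(3) by (simp add: a_def b_def d_def)
  have dnz: "d \<noteq> 0" using Oyy by (simp add: d_def)
  have tr: "a + d > 4" using trace by (simp add: a_def d_def)
  define beta where "beta = 6 * cubr w d (- b)"
  have bnz: "beta \<noteq> 0"
  proof -
    have "beta = pd 3 0 Om x0 y0 * d^3 - 3 * pd 2 1 Om x0 y0 * d^2 * b + 3 * pd 1 2 Om x0 y0 * d * b^2 - pd 0 3 Om x0 y0 * b^3"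
      unfolding beta_def cubr_def pw(3) pw(6) pw(8) pw(9) by algebra
    then show ?thesis using nondeg by (simp add: b_def d_def)
  qed
  define alpha where "alpha = 4 * d - d^2 - b^2"
  have anz: "alpha \<noteq> 0"
  proof -
    have "alpha = d * (4 - a - d)" using ad by (simp add: alpha_def algebra_simps power2_eq_square)
    moreover have "4 - a - d \<noteq> 0" using tr by simp
    ultimately show ?thesis using dnz by simp
  qed
  define c2 where "c2 = root 3 (- 3 * alpha / beta)"
  have c2pow: "c2 ^ 3 = - 3 * alpha / beta" by (simp add: c2_def odd_real_root_pow)
  have c2nz: "c2 \<noteq> 0" using c2pow anz bnz by auto
  define L where "L = beta * c2^2"
  have Lnz: "L \<noteq> 0" by (simp add: L_def bnz c2nz)
  define C where "C = Cmat Om x0 y0"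
  have Cv: "C$1$1 = d" "C$2$1 = 0" "C$3$1 = - b" "C$4$1 = 0" "C$1$2 = b" "C$2$2 = d" "C$3$2 = 2 - a" "C$4$2 = - b"
    by (simp_all add: C_def Cmat_def Let_def transpose_def vector_def a_def b_def d_def)
  define Z where "Z cs = K_of_h K cs" for cs
  define Psi where "Psi cs = PsiF m px py x0 y0 (Pc C (Z cs) 1) (Pc C (Z cs) 2) (Pc C (Z cs) 3) (Pc C (Z cs) 4)" for cs
  have Ecal_eq: "Ecal Om x0 y0 = (\<lambda>z. jacobi (Omega m px py) (C *v z + Lc x0 y0))"
    by (rule ext) (simp add: Ecal_def C_def Om_eq)
  have comp: "comp1 (Ecal Om x0 y0) (K_of_h K cs) = Psi cs" if c: "cs 0 = 0" "cs 1 = 0" for cs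
    unfolding Ecal_eq Psi_def Z_def
    by (rule comp1_eq_PsiF[OF _ D]) (use Z0[OF K0 K10 K01 c] in \<open>simp add: Zs_def\<close>)
  have E0: "Ecal Om x0 y0 0 = Ej0 m px py x0 y0"
    by (simp add: Ecal_def jacobi_def Lc_nth Om_eq Omega_def Ej0_def)
  have LTs: "LT 2 (d * cs 2) (Pc C (Z cs) 1) \<and> LT 2 (- b * cs 2) (Pc C (Z cs) 3) \<and> LT 3 d (Pc C (Z cs) 2)
      \<and> LT 3 (- b) (Pc C (Z cs) 4) \<and> LT 3 (2 * d) (fps_const b * Pc C (Z cs) 1 + fps_const d * Pc C (Z cs) 3)"
    if c: "cs 0 = 0" "cs 1 = 0" for cs
  proof -
    have z1: "LT 2 (cs 2) (Z cs $ 1)" using LTZ1[OF K0 K10 K01 c] by (simp add: Zs_def Z_def)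
    have z2: "LT 3 1 (Z cs $ 2)" using LTZ2[OF K0 K10 K01 c] by (simp add: Zs_def Z_def)
    have z3: "LT 3 0 (Z cs $ 3)" using LTZ3[OF K0 K10 K01 c] by (simp add: Zs_def Z_def)
    have z4: "LT 3 0 (Z cs $ 4)" using LTZ4[OF K0 K10 K01 c] by (simp add: Zs_def Z_def)
    have z2': "LT 2 0 (Z cs $ 2)" by (rule LT_of_van[OF LT_van[OF z2]]) simp
    have z3': "LT 2 0 (Z cs $ 3)" by (rule LT_of_van[OF LT_van[OF z3]]) simp
    have z4': "LT 2 0 (Z cs $ 4)" by (rule LT_of_van[OF LT_van[OF z4]]) simp
    have "LT 2 (C$1$1 * cs 2 + C$1$2 * 0 + C$1$3 * 0 + C$1$4 * 0) (Pc C (Z cs) 1)"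
      unfolding Pc_expand by (rule LT_lin4[OF z1 z2' z3' z4'])
    then have p1: "LT 2 (d * cs 2) (Pc C (Z cs) 1)" by (simp add: Cv)
    have "LT 2 (C$3$1 * cs 2 + C$3$2 * 0 + C$3$3 * 0 + C$3$4 * 0) (Pc C (Z cs) 3)"
      unfolding Pc_expand by (rule LT_lin4[OF z1 z2' z3' z4'])
    then have p3: "LT 2 (- b * cs 2) (Pc C (Z cs) 3)" by (simp add: Cv)
    have "LT 3 (C$2$2 * 1 + C$2$3 * 0 + C$2$4 * 0) (Pc C (Z cs) 2)"
      unfolding Pc_expand by (rule LT_lin4_0[OF Cv(2) z2 z3 z4])
    then have p2: "LT 3 d (Pc C (Z cs) 2)" by (simp add: Cv)
    have "LT 3 (C$4$2 * 1 + C$4$3 * 0 + C$4$4 * 0) (Pc C (Z cs) 4)"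
      unfolding Pc_expand by (rule LT_lin4_0[OF Cv(4) z2 z3 z4])
    then have p4: "LT 3 (- b) (Pc C (Z cs) 4)" by (simp add: Cv)
    have l0: "b * C$1$1 + d * C$3$1 = 0" by (simp add: Cv)
    have l2: "b * C$1$2 + d * C$3$2 = 2 * d" using ad by (simp add: Cv algebra_simps power2_eq_square)
    have "LT 3 ((b * C$1$2 + d * C$3$2) * 1 + (b * C$1$3 + d * C$3$3) * 0 + (b * C$1$4 + d * C$3$4) * 0)
       (fps_const b * Pc C (Z cs) 1 + fps_const d * Pc C (Z cs) 3)"
      unfolding Pc_expand lin4_comb by (rule LT_lin4_0[OF l0 z2 z3 z4])
    then have pl: "LT 3 (2 * d) (fps_const b * Pc C (Z cs) 1 + fps_const d * Pc C (Z cs) 3)"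
      by (simp add: l2)
    show ?thesis using p1 p2 p3 p4 pl by blast
  qed
  have Ppert: "LT N (d * (cs' N - cs N)) (Pc C (Z cs') 1 - Pc C (Z cs) 1)
      \<and> LT N (- b * (cs' N - cs N)) (Pc C (Z cs') 3 - Pc C (Z cs) 3)
      \<and> LT (Suc N) 0 (Pc C (Z cs') 2 - Pc C (Z cs) 2) \<and> LT (Suc N) 0 (Pc C (Z cs') 4 - Pc C (Z cs) 4)
      \<and> LT (Suc N) 0 ((fps_const b * Pc C (Z cs') 1 + fps_const d * Pc C (Z cs') 3) - (fps_const b * Pc C (Z cs) 1 + fps_const d * Pc C (Z cs) 3))"
    if c: "cs 0 = 0" "cs 1 = 0" "cs' 0 = 0" "cs' 1 = 0" and agree: "\<And>i. i < N \<Longrightarrow> cs' i = cs i" and N: "3 \<le> N" for cs cs' N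
  proof -
    have N2: "2 \<le> N" using N by simp
    have z1: "LT N (cs' N - cs N) (Z cs' $ 1 - Z cs $ 1)" using LTZ1p[OF K0 K10 K01 c agree N2] by (simp add: Zs_def Z_def)
    have z2: "LT (Suc N) 0 (Z cs' $ 2 - Z cs $ 2)" using LTZkp[OF K0 K10 K01 c agree N2, of 2] by (simp add: Zs_def Z_def)
    have z3: "LT (Suc N) 0 (Z cs' $ 3 - Z cs $ 3)" using LTZkp[OF K0 K10 K01 c agree N2, of 3] by (simp add: Zs_def Z_def)
    have z4: "LT (Suc N) 0 (Z cs' $ 4 - Z cs $ 4)" using LTZkp[OF K0 K10 K01 c agree N2, of 4] by (simp add: Zs_def Z_def)
    have z2': "LT N 0 (Z cs' $ 2 - Z cs $ 2)" using z2 by (rule LT_zero_mono) simp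
    have z3': "LT N 0 (Z cs' $ 3 - Z cs $ 3)" using z3 by (rule LT_zero_mono) simp
    have z4': "LT N 0 (Z cs' $ 4 - Z cs $ 4)" using z4 by (rule LT_zero_mono) simp
    have "LT N (C$1$1 * (cs' N - cs N) + C$1$2 * 0 + C$1$3 * 0 + C$1$4 * 0) (Pc C (Z cs') 1 - Pc C (Z cs) 1)"
      unfolding Pc_expand lin4_diff by (rule LT_lin4[OF z1 z2' z3' z4'])
    then have p1: "LT N (d * (cs' N - cs N)) (Pc C (Z cs') 1 - Pc C (Z cs) 1)" by (simp add: Cv)
    have "LT N (C$3$1 * (cs' N - cs N) + C$3$2 * 0 + C$3$3 * 0 + C$3$4 * 0) (Pc C (Z cs') 3 - Pc C (Z cs) 3)"
      unfolding Pc_expand lin4_diff by (rule LT_lin4[OF z1 z2' z3' z4'])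
    then have p3: "LT N (- b * (cs' N - cs N)) (Pc C (Z cs') 3 - Pc C (Z cs) 3)" by (simp add: Cv)
    have "LT (Suc N) (C$2$2 * 0 + C$2$3 * 0 + C$2$4 * 0) (Pc C (Z cs') 2 - Pc C (Z cs) 2)"
      unfolding Pc_expand lin4_diff by (rule LT_lin4_0[OF Cv(2) z2 z3 z4])
    then have p2: "LT (Suc N) 0 (Pc C (Z cs') 2 - Pc C (Z cs) 2)" by simp
    have "LT (Suc N) (C$4$2 * 0 + C$4$3 * 0 + C$4$4 * 0) (Pc C (Z cs') 4 - Pc C (Z cs) 4)"
      unfolding Pc_expand lin4_diff by (rule LT_lin4_0[OF Cv(4) z2 z3 z4])
    then have p4: "LT (Suc N) 0 (Pc C (Z cs') 4 - Pc C (Z cs) 4)" by simp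
    have l0: "b * C$1$1 + d * C$3$1 = 0" by (simp add: Cv)
    have pl: "LT (Suc N) 0 ((fps_const b * Pc C (Z cs') 1 + fps_const d * Pc C (Z cs') 3) - (fps_const b * Pc C (Z cs) 1 + fps_const d * Pc C (Z cs) 3))"
    proof -
      have "LT (Suc N) ((b * C$1$2 + d * C$3$2) * 0 + (b * C$1$3 + d * C$3$3) * 0 + (b * C$1$4 + d * C$3$4) * 0)
        ((fps_const b * Pc C (Z cs') 1 + fps_const d * Pc C (Z cs') 3) - (fps_const b * Pc C (Z cs) 1 + fps_const d * Pc C (Z cs) 3))"
        unfolding Pc_expand lin4_comb lin4_diff by (rule LT_lin4_0[OF l0 z2 z3 z4])
      then show ?thesis by simp
    qed
    show ?thesis using p1 p2 p3 p4 pl by blast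
  qed
  have H6: "van 7 (Psi cs - fps_const (Ej0 m px py x0 y0))" if c: "cs 0 = 0" "cs 1 = 0" "cs 2 = c2" for cs
  proof -
    note lt = LTs[OF c(1,2)]
    have "LT 6 (- (d^2 + b^2) + 2 * (2 * d + cubr (om3 m px py x0 y0) (d * cs 2) (- b * cs 2)))
       (PsiF m px py x0 y0 (Pc C (Z cs) 1) (Pc C (Z cs) 2) (Pc C (Z cs) 3) (Pc C (Z cs) 4) - fps_const (Ej0 m px py x0 y0))"
      by (rule Psi_LT6[OF D w10[unfolded w_def] w01[unfolded w_def] w20[unfolded w_def] w11[unfolded w_def]
            w02[unfolded w_def] ad dnz]) (use lt in auto)
    moreover have "- (d^2 + b^2) + 2 * (2 * d + cubr w (d * cs 2) (- b * cs 2)) = 0"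
    proof -
      have "cubr w (d * c2) (- b * c2) = c2^3 * cubr w d (- b)" unfolding cubr_def by algebra
      also have "\<dots> = c2^3 * beta / 6" by (simp add: beta_def)
      finally have "cubr w (d * c2) (- b * c2) = (- 3 * alpha / beta) * beta / 6" by (simp add: c2pow)
      then have "cubr w (d * c2) (- b * c2) = - alpha / 2" using bnz by (simp add: field_simps)
      then show ?thesis using c(3) by (simp add: alpha_def algebra_simps)
    qed
    ultimately have "LT 6 0 (Psi cs - fps_const (Ej0 m px py x0 y0))" by (simp add: Psi_def w_def)
    then show ?thesis by (simp add: LT_zero_iff)
  qed
  have HP: "LT (N + 4) (L * (cs' N - cs N)) (Psi cs' - Psi cs)"
    if c: "cs 0 = 0" "cs 1 = 0" "cs 2 = c2" "cs' 0 = 0" "cs' 1 = 0" and agree: "\<And>i. i < N \<Longrightarrow> cs' i = cs i"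
      and N: "3 \<le> N" for cs cs' N
  proof -
    have c2': "cs' 2 = c2" using agree[of 2] N c(3) by simp
    note lt = LTs[OF c(1,2)]
    note lt' = LTs[OF c(4,5)]
    note pp = Ppert[OF c(1,2,4,5) agree N]
    define s where "s = cs' N - cs N"
    have "LT (N + 4) (2 * (w 3 0 * ((d * s) * (3 * (d * c2)^2)) + w 2 1 * ((d * s) * (2 * (d * c2)) * (- b * c2) + (d * c2)^2 * (- b * s))
      + w 1 2 * ((d * s) * (- b * c2)^2 + (d * c2) * ((- b * s) * (2 * (- b * c2)))) + w 0 3 * ((- b * s) * (3 * (- b * c2)^2))))
     (PsiF m px py x0 y0 (Pc C (Z cs') 1) (Pc C (Z cs') 2) (Pc C (Z cs') 3) (Pc C (Z cs') 4)
      - PsiF m px py x0 y0 (Pc C (Z cs) 1) (Pc C (Z cs) 2) (Pc C (Z cs) 3) (Pc C (Z cs) 4))"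
      unfolding w_def
      by (rule Psi_pert[OF D w10[unfolded w_def] w01[unfolded w_def] w20[unfolded w_def] w11[unfolded w_def]
            w02[unfolded w_def] ad dnz]) (use lt lt' pp N c(3) c2' in \<open>auto simp: s_def\<close>)
    moreover have "2 * (w 3 0 * ((d * s) * (3 * (d * c2)^2)) + w 2 1 * ((d * s) * (2 * (d * c2)) * (- b * c2) + (d * c2)^2 * (- b * s))
      + w 1 2 * ((d * s) * (- b * c2)^2 + (d * c2) * ((- b * s) * (2 * (- b * c2)))) + w 0 3 * ((- b * s) * (3 * (- b * c2)^2)))
      = L * s"
      unfolding L_def beta_def cubr_def by algebra
    ultimately show ?thesis by (simp add: Psi_def s_def)
  qed
  obtain c where c: "c 0 = 0" "c 1 = 0" "Psi c - fps_const (Ej0 m px py x0 y0) = 0"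
    using construct[OF Lnz H6 HP] by blast
  have "comp1 (Ecal Om x0 y0) (K_of_h K c) - fps_const (Ecal Om x0 y0 0) = 0"
    using comp[OF c(1,2)] E0 c(3) by simp
  then show ?thesis using c(1,2) by blast
qed

end
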